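(* If $g\ge1$ and $n\ge1$, the map $\mathcal{K}\mapsto\mathcal{Z}_{\mathcal{K}}$ is a bijection from the set of simplicial complexes on $[n]$ to the set of extremal assignments on $\mathbb{G}_{g,n}$ supported on rational tails. If $g=0$ and $n\ge3$, the map $\mathcal{K}\mapsto\mathcal{Z}_{\mathcal{K}}$ is a bijection from the set of at least triparted simplicial complexes on $[n]$ to the set of extremal assignments on $\mathbb{G}_{0,n}$ supported on rational tails.
   Context: A simplicial complex on $[n]$ is a downward-closed family of subsets containing all singletons; it is at least triparted if every partition of $[n]$ with all parts in $\mathcal{K}$ has at least three parts. $\mathbb{G}_{g,n}$ is the set of isomorphism classes of dual graphs of stable $n$-pointed genus $g$ curves (connected graphs with vertex genera and $n$ labelled legs, total genus $g$, all vertices stable). A weighted edge contraction $\pi:G'\to G$ contracts a set of edges; $\pi^{-1}(v)$ is the subgraph contracted to $v$. An extremal assignment on $\mathbb{G}_{g,n}$ assigns to each $G$ a vertex-induced subgraph $\mathcal{Z}(G)$ with (Z1) $\mathcal{Z}(G)\ne G$ and (Z2) for every weighted edge contraction $\pi:G'\to G$ and $v\in V(G)$: $v\in\mathcal{Z}(G)$ iff $\pi^{-1}(v)\subseteq\mathcal{Z}(G')$. A rational tail of $G$ is a connected genus $0$ vertex-induced subgraph joined to its complement by exactly one edge; $\operatorname{Marks}(T)$ is the set of leg labels on $T$. $\mathcal{Z}$ is supported on rational tails if each $\mathcal{Z}(G)$ is a disjoint union of rational tails. $\mathcal{Z}_{\mathcal{K}}$ assigns to $G$ the smallest vertex-induced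 subgraph of $G$ containing all rational tails $T$ with $\operatorname{Marks}(T)\in\mathcal{K}$. *)

theory Defs
  imports Main
begin

definition simplicial_complex :: "nat \<Rightarrow> nat set set \<Rightarrow> bool" where
  "simplicial_complex n K \<longleftrightarrow>
     K \<subseteq> Pow {1..n} \<and>
     (\<forall>A\<in>K. \<forall>B. B \<subseteq> A \<longrightarrow> B \<in> K) \<and>
     (\<forall>i\<in>{1..n}. {i} \<in> K)"

definition set_partition :: "nat set \<Rightarrow> nat set set \<Rightarrow> bool" where
  "set_partition X P \<longleftrightarrow>
     (\<forall>A\<in>P. A \<noteq> {}) \<and> \<Union>P = X \<and>
     (\<forall>A\<in>P. \<forall>B\<in>P. A \<noteq> B \<longrightarrow> A \<inter> B = {})"

definition at_least_triparted :: "nat \<Rightarrow> nat set set \<Rightarrow> bool" where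
  "at_least_triparted n K \<longleftrightarrow>
     (\<forall>P. set_partition {1..n} P \<and> P \<subseteq> K \<longrightarrow> card P \<ge> 3)"

text \<open>A graph: vertex set, edge set, endpoints of each edge (a set of one vertex for
  a loop, of two vertices otherwise), vertex genera, and the vertex carrying leg i.\<close>

record sgraph =
  verts :: "nat set"
  edges :: "nat set"
  ends  :: "nat \<Rightarrow> nat set"
  gen   :: "nat \<Rightarrow> nat"
  leg   :: "nat \<Rightarrow> nat"

definition adj :: "sgraph \<Rightarrow> nat set \<Rightarrow> nat set \<Rightarrow> (nat \<times> nat) set" where
  "adj G W F = {(u, w). u \<in> W \<and> w \<in> W \<and> (\<exists>e\<in>F. ends G e = {u, w})}"

definition connected_sub :: "sgraph \<Rightarrow> nat set \<Rightarrow> nat set \<Rightarrow> bool" where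
  "connected_sub G W F \<longleftrightarrow> (\<forall>u\<in>W. \<forall>w\<in>W. (u, w) \<in> (adj G W F)\<^sup>*)"

text \<open>Genus of a (connected) subgraph: sum of vertex genera plus first Betti number.\<close>
definition sub_genus :: "sgraph \<Rightarrow> nat set \<Rightarrow> nat set \<Rightarrow> int" where
  "sub_genus G W F = (\<Sum>v\<in>W. int (gen G v)) + int (card F) - int (card W) + 1"

definition valence :: "nat \<Rightarrow> sgraph \<Rightarrow> nat \<Rightarrow> nat" where
  "valence n G v =
     (\<Sum>e\<in>edges G. if ends G e = {v} then 2 else if v \<in> ends G e then 1 else 0)
     + card {i\<in>{1..n}. leg G i = v}"

text \<open>Dual graph of a stable n-pointed genus g curve (a concrete representative).\<close>
definition stable_graph :: "nat \<Rightarrow> nat \<Rightarrow> sgraph \<Rightarrow> bool" where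
  "stable_graph g n G \<longleftrightarrow>
     finite (verts G) \<and> verts G \<noteq> {} \<and> finite (edges G) \<and>
     (\<forall>e\<in>edges G. ends G e \<subseteq> verts G \<and> (card (ends G e) = 1 \<or> card (ends G e) = 2)) \<and>
     (\<forall>i\<in>{1..n}. leg G i \<in> verts G) \<and>
     connected_sub G (verts G) (edges G) \<and>
     sub_genus G (verts G) (edges G) = int g \<and>
     (\<forall>v\<in>verts G. 2 * int (gen G v) - 2 + int (valence n G v) > 0)"

text \<open>Weighted edge contraction pi: G' -> G contracting the edge set S:
  f is the vertex map, h the bijection between the remaining edges.\<close>
definition fiber :: "sgraph \<Rightarrow> (nat \<Rightarrow> nat) \<Rightarrow> nat \<Rightarrow> nat set" where
  "fiber G' f v = {u\<in>verts G'. f u = v}"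

definition contraction ::
  "nat \<Rightarrow> sgraph \<Rightarrow> sgraph \<Rightarrow> nat set \<Rightarrow> (nat \<Rightarrow> nat) \<Rightarrow> (nat \<Rightarrow> nat) \<Rightarrow> bool" where
  "contraction n G' G S f h \<longleftrightarrow>
     S \<subseteq> edges G' \<and>
     f ` verts G' = verts G \<and>
     bij_betw h (edges G' - S) (edges G) \<and>
     (\<forall>e\<in>edges G' - S. ends G (h e) = f ` ends G' e) \<and>
     (\<forall>e\<in>S. card (f ` ends G' e) = 1) \<and>
     (\<forall>i\<in>{1..n}. leg G i = f (leg G' i)) \<and>
     (\<forall>v\<in>verts G.
        connected_sub G' (fiber G' f v) {e\<in>S. ends G' e \<subseteq> fiber G' f v} \<and>
        int (gen G v) = sub_genus G' (fiber G' f v) {e\<in>S. ends G' e \<subseteq> fiber G' f v})"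

text \<open>An assignment gives a vertex set (the vertex-induced subgraph Z(G)); by convention
  it is empty on objects that are not stable graphs of type (g,n).
  Isomorphisms are contractions of the empty edge set, so (Z2) includes isomorphism
  invariance, i.e. Z is well defined on isomorphism classes.\<close>
definition extremal_assignment :: "nat \<Rightarrow> nat \<Rightarrow> (sgraph \<Rightarrow> nat set) \<Rightarrow> bool" where
  "extremal_assignment g n Z \<longleftrightarrow>
     (\<forall>G. \<not> stable_graph g n G \<longrightarrow> Z G = {}) \<and>
     (\<forall>G. stable_graph g n G \<longrightarrow> Z G \<subseteq> verts G \<and> Z G \<noteq> verts G) \<and>
     (\<forall>G' G S f h. stable_graph g n G' \<and> stable_graph g n G \<and> contraction n G' G S f h \<longrightarrow>
        (\<forall>v\<in>verts G. v \<in> Z G \<longleftrightarrow> fiber G' f v \<subseteq> Z G'))"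

definition inner_edges :: "sgraph \<Rightarrow> nat set \<Rightarrow> nat set" where
  "inner_edges G T = {e\<in>edges G. ends G e \<subseteq> T}"

definition rational_tail :: "sgraph \<Rightarrow> nat set \<Rightarrow> bool" where
  "rational_tail G T \<longleftrightarrow>
     T \<subseteq> verts G \<and> T \<noteq> {} \<and>
     connected_sub G T (inner_edges G T) \<and>
     sub_genus G T (inner_edges G T) = 0 \<and>
     card {e\<in>edges G. ends G e \<inter> T \<noteq> {} \<and> \<not> ends G e \<subseteq> T} = 1"

definition marks :: "nat \<Rightarrow> sgraph \<Rightarrow> nat set \<Rightarrow> nat set" where
  "marks n G T = {i\<in>{1..n}. leg G i \<in> T}"

definition supported_on_rational_tails :: "nat \<Rightarrow> nat \<Rightarrow> (sgraph \<Rightarrow> nat set) \<Rightarrow> bool" where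
  "supported_on_rational_tails g n Z \<longleftrightarrow>
     (\<forall>G. stable_graph g n G \<longrightarrow>
        (\<exists>\<T>. (\<forall>T\<in>\<T>. rational_tail G T) \<and>
             (\<forall>T1\<in>\<T>. \<forall>T2\<in>\<T>. T1 \<noteq> T2 \<longrightarrow>
                 T1 \<inter> T2 = {} \<and> (\<forall>e\<in>edges G. \<not> (ends G e \<inter> T1 \<noteq> {} \<and> ends G e \<inter> T2 \<noteq> {}))) \<and>
             \<Union>\<T> = Z G))"

definition Z_of :: "nat \<Rightarrow> nat \<Rightarrow> nat set set \<Rightarrow> sgraph \<Rightarrow> nat set" where
  "Z_of g n K G = (if stable_graph g n G
     then \<Union>{T. rational_tail G T \<and> marks n G T \<in> K} else {})"

end

theory Submission
  imports Defs
begin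

lemma adj_iff: "(u,w) \<in> adj G W F \<longleftrightarrow> u \<in> W \<and> w \<in> W \<and> (\<exists>e\<in>F. ends G e = {u,w})"
  unfolding adj_def by auto

lemma adj_sym: "(u,w) \<in> adj G W F \<Longrightarrow> (w,u) \<in> adj G W F"
  unfolding adj_iff by (auto simp: insert_commute)

lemma adj_rtrancl_sym: "(u,w) \<in> (adj G W F)\<^sup>* \<Longrightarrow> (w,u) \<in> (adj G W F)\<^sup>*"
proof (induction rule: rtrancl_induct)
  case base then show ?case by simp
next
  case (step y z)
  then show ?case using adj_sym[OF step(2)] by (meson converse_rtrancl_into_rtrancl)
qed

lemma adj_mono: "W \<subseteq> W' \<Longrightarrow> F \<subseteq> F' \<Longrightarrow> adj G W F \<subseteq> adj G W' F'"
  unfolding adj_def by blast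

lemma adj_rtrancl_mono: "W \<subseteq> W' \<Longrightarrow> F \<subseteq> F' \<Longrightarrow> (u,w) \<in> (adj G W F)\<^sup>* \<Longrightarrow> (u,w) \<in> (adj G W' F')\<^sup>*"
  using rtrancl_mono[OF adj_mono] by blast

lemma adj_rtrancl_in: "(u,w) \<in> (adj G W F)\<^sup>* \<Longrightarrow> u \<in> W \<Longrightarrow> w \<in> W"
  by (induction rule: rtrancl_induct) (auto simp: adj_iff)

lemma connected_mono: "connected_sub G W F \<Longrightarrow> F \<subseteq> F' \<Longrightarrow> connected_sub G W F'"
  unfolding connected_sub_def using adj_rtrancl_mono by blast

lemma cross:
  assumes "(x,y) \<in> (adj G W F)\<^sup>*" "x \<in> X" "y \<notin> X"
  shows "\<exists>e\<in>F. \<exists>p q. ends G e = {p,q} \<and> p \<in> W \<and> p \<in> X \<and> q \<in> W \<and> q \<notin> X"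
proof -
  have "y \<notin> X \<longrightarrow> (\<exists>e\<in>F. \<exists>p q. ends G e = {p,q} \<and> p \<in> W \<and> p \<in> X \<and> q \<in> W \<and> q \<notin> X)"
    using assms(1)
  proof (induction rule: rtrancl_induct)
    case base then show ?case using assms(2) by simp
  next
    case (step y z)
    show ?case
    proof
      assume z: "z \<notin> X"
      show "\<exists>e\<in>F. \<exists>p q. ends G e = {p,q} \<and> p \<in> W \<and> p \<in> X \<and> q \<in> W \<and> q \<notin> X"
      proof (cases "y \<in> X")
        case True
        then show ?thesis using step(2) z unfolding adj_iff by blast
      next
        case False
        then show ?thesis using step(3) by blast
      qed
    qed
  qed
  then show ?thesis using assms(3) by blast
qed

lemma cross_conn:
  assumes "connected_sub G W F" "x \<in> W" "x \<in> X" "y \<in> W" "y \<notin> X"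
  shows "\<exists>e\<in>F. \<exists>p q. ends G e = {p,q} \<and> p \<in> W \<and> p \<in> X \<and> q \<in> W \<and> q \<notin> X"
  using assms cross unfolding connected_sub_def by metis

lemma conn_part:
  assumes conn: "connected_sub G W F" and AW: "A \<subseteq> W" and a0: "a0 \<in> A"
    and hyp: "\<forall>e\<in>F. \<forall>p q. ends G e = {p,q} \<and> p \<in> A \<and> q \<in> W - A \<longrightarrow> p = a0"
  shows "connected_sub G A {e\<in>F. ends G e \<subseteq> A}"
proof -
  let ?R = "adj G A {e\<in>F. ends G e \<subseteq> A}"
  have key: "(y \<in> A \<longrightarrow> (x,y) \<in> ?R\<^sup>*) \<and> (y \<notin> A \<longrightarrow> (x,a0) \<in> ?R\<^sup>*)"
    if x: "x \<in> A" and p: "(x,y) \<in> (adj G W F)\<^sup>*" for x y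
    using p
  proof (induction rule: rtrancl_induct)
    case base then show ?case using x by simp
  next
    case (step y z)
    obtain e where e: "e \<in> F" "ends G e = {y,z}" and yz: "y \<in> W" "z \<in> W"
      using step(2) unfolding adj_iff by blast
    show ?case
    proof (cases "y \<in> A")
      case yA: True
      show ?thesis
      proof (cases "z \<in> A")
        case True
        then have "(y,z) \<in> ?R" using yA e yz unfolding adj_iff by auto
        then show ?thesis using step(3) yA True by (meson rtrancl_into_rtrancl)
      next
        case False
        then have "y = a0" using hyp e yA yz by blast
        then show ?thesis using step(3) yA False by blast
      qed
    next
      case yA: False
      show ?thesis
      proof (cases "z \<in> A")
        case True
        have "ends G e = {z,y}" using e by (simp add: insert_commute)
        then have "z = a0" using hyp e True yA yz by blast
        then show ?thesis using step(3) yA True by blast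
      qed (use step(3) yA in blast)
    qed
  qed
  show ?thesis unfolding connected_sub_def
  proof (intro ballI)
    fix u w assume u: "u \<in> A" and w: "w \<in> A"
    then have "(u,w) \<in> (adj G W F)\<^sup>*" using conn AW unfolding connected_sub_def by blast
    then show "(u,w) \<in> ?R\<^sup>*" using key[OF u] w by blast
  qed
qed

lemma forest_aux:
  assumes fW: "finite W" and fF: "finite F" and eW: "\<forall>e\<in>F. ends G e \<subseteq> W"
  shows "\<forall>R. card (W - R) = k \<longrightarrow> R \<subseteq> W \<longrightarrow> (\<forall>w\<in>W. \<exists>r\<in>R. (r,w) \<in> (adj G W F)\<^sup>*)
           \<longrightarrow> card (W - R) \<le> card {e\<in>F. \<not> ends G e \<subseteq> R}"
proof (induction k)
  case 0 then show ?case by simp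
next
  case (Suc k)
  show ?case
  proof (intro allI impI)
    fix R assume ck: "card (W - R) = Suc k" and RW: "R \<subseteq> W" and reach: "\<forall>w\<in>W. \<exists>r\<in>R. (r,w) \<in> (adj G W F)\<^sup>*"
    have "W - R \<noteq> {}"
    proof
      assume h: "W - R = {}"
      have "card (W - R) = 0" by (simp only: h card.empty)
      then show False using ck by simp
    qed
    then obtain w where w: "w \<in> W - R" by blast
    obtain r where r: "r \<in> R" "(r,w) \<in> (adj G W F)\<^sup>*" using reach w by blast
    obtain e p q where e: "e \<in> F" "ends G e = {p,q}" "p \<in> R" "q \<in> W" "q \<notin> R"
      using cross[OF r(2) r(1)] w by blast
    let ?R' = "insert q R"
    have "W - ?R' = (W - R) - {q}" by auto
    moreover have "q \<in> W - R" using e by simp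
    ultimately have c': "card (W - ?R') = k" using ck fW by (simp add: card_Diff_singleton)
    have reach': "\<forall>w\<in>W. \<exists>r\<in>?R'. (r,w) \<in> (adj G W F)\<^sup>*" using reach by blast
    have IH: "card (W - ?R') \<le> card {e\<in>F. \<not> ends G e \<subseteq> ?R'}"
      using Suc.IH c' RW e reach' by blast
    have sub: "{e\<in>F. \<not> ends G e \<subseteq> ?R'} \<subseteq> {e\<in>F. \<not> ends G e \<subseteq> R} - {e}"
      using e by auto
    have ein: "e \<in> {e\<in>F. \<not> ends G e \<subseteq> R}" using e by auto
    have "card {e\<in>F. \<not> ends G e \<subseteq> ?R'} \<le> card {e\<in>F. \<not> ends G e \<subseteq> R} - 1"
      using card_mono[OF _ sub] fF ein by (simp add: card_Diff_singleton)
    moreover have "card {e\<in>F. \<not> ends G e \<subseteq> R} \<ge> 1"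
    proof -
      have "finite {e\<in>F. \<not> ends G e \<subseteq> R}" using fF by simp
      then have "card {e\<in>F. \<not> ends G e \<subseteq> R} > 0" using ein card_gt_0_iff by blast
      then show ?thesis by simp
    qed
    ultimately show "card (W - R) \<le> card {e\<in>F. \<not> ends G e \<subseteq> R}" using IH c' ck by linarith
  qed
qed

lemma forest:
  assumes "finite W" "finite F" "\<forall>e\<in>F. ends G e \<subseteq> W" "R \<subseteq> W"
    "\<forall>w\<in>W. \<exists>r\<in>R. (r,w) \<in> (adj G W F)\<^sup>*"
  shows "card (W - R) \<le> card {e\<in>F. \<not> ends G e \<subseteq> R}"
  using forest_aux[OF assms(1-3)] assms(4,5) by blast

lemma genus_nonneg:
  assumes "connected_sub G W F" "finite W" "W \<noteq> {}" "finite F" "\<forall>e\<in>F. ends G e \<subseteq> W"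
  shows "sub_genus G W F \<ge> 0"
proof -
  obtain r where r: "r \<in> W" using assms(3) by blast
  have "card (W - {r}) \<le> card {e\<in>F. \<not> ends G e \<subseteq> {r}}"
    using forest[OF assms(2,4,5), of "{r}"] r assms(1) unfolding connected_sub_def by blast
  also have "\<dots> \<le> card F" using assms(4) by (intro card_mono) auto
  finally have "card W \<le> card F + 1" using r assms(2) by (simp add: card_Diff_singleton)
  moreover have "(\<Sum>v\<in>W. int (gen G v)) \<ge> 0" by (simp add: sum_nonneg)
  ultimately show ?thesis unfolding sub_genus_def by linarith
qed

lemma genus_mono:
  assumes conn: "connected_sub G W F" and fW: "finite W" and fF: "finite F"
    and eW: "\<forall>e\<in>F. ends G e \<subseteq> W" and sub: "W' \<subseteq> W" and ne: "W' \<noteq> {}"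
  shows "sub_genus G W' {e\<in>F. ends G e \<subseteq> W'} \<le> sub_genus G W F"
proof -
  have reach: "\<forall>w\<in>W. \<exists>r\<in>W'. (r,w) \<in> (adj G W F)\<^sup>*"
    using conn ne sub unfolding connected_sub_def by blast
  have c1: "card (W - W') \<le> card {e\<in>F. \<not> ends G e \<subseteq> W'}"
    using forest[OF fW fF eW sub reach] .
  have "F = {e\<in>F. ends G e \<subseteq> W'} \<union> {e\<in>F. \<not> ends G e \<subseteq> W'}" by auto
  then have c2: "card F = card {e\<in>F. ends G e \<subseteq> W'} + card {e\<in>F. \<not> ends G e \<subseteq> W'}"
    using fF card_Un_disjoint[of "{e\<in>F. ends G e \<subseteq> W'}" "{e\<in>F. \<not> ends G e \<subseteq> W'}"] by auto
  have fW': "finite W'" using fW sub finite_subset by blast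
  have c3: "card W = card W' + card (W - W')"
    using fW' sub card_Diff_subset[OF fW' sub] card_mono[OF fW sub] by simp
  have s: "(\<Sum>v\<in>W. int (gen G v)) = (\<Sum>v\<in>W'. int (gen G v)) + (\<Sum>v\<in>W-W'. int (gen G v))"
    using fW sub sum.subset_diff by (metis add.commute)
  have "(\<Sum>v\<in>W-W'. int (gen G v)) \<ge> 0" by (simp add: sum_nonneg)
  then show ?thesis unfolding sub_genus_def using c1 c2 c3 s by linarith
qed

lemma genus_split:
  assumes "finite A" "finite B" "A \<inter> B = {}" "finite FA" "finite FB" "finite X"
    "FA \<inter> FB = {}" "FA \<inter> X = {}" "FB \<inter> X = {}"
  shows "sub_genus G (A \<union> B) (FA \<union> FB \<union> X) = sub_genus G A FA + sub_genus G B FB + int (card X) - 1"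
proof -
  have "card (FA \<union> FB \<union> X) = card FA + card FB + card X"
    using assms by (simp add: card_Un_disjoint Int_Un_distrib2)
  moreover have "card (A \<union> B) = card A + card B" using assms by (simp add: card_Un_disjoint)
  moreover have "(\<Sum>v\<in>A \<union> B. int (gen G v)) = (\<Sum>v\<in>A. int (gen G v)) + (\<Sum>v\<in>B. int (gen G v))"
    using assms by (simp add: sum.union_disjoint)
  ultimately show ?thesis unfolding sub_genus_def by simp
qed


definition cutE :: "sgraph \<Rightarrow> nat set \<Rightarrow> nat set" where
  "cutE G T = {e\<in>edges G. ends G e \<inter> T \<noteq> {} \<and> \<not> ends G e \<subseteq> T}"

lemma rt_iff: "rational_tail G T \<longleftrightarrow> T \<subseteq> verts G \<and> T \<noteq> {} \<and> connected_sub G T (inner_edges G T)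
   \<and> sub_genus G T (inner_edges G T) = 0 \<and> card (cutE G T) = 1"
  unfolding rational_tail_def cutE_def by simp

lemma inner_ends: "e \<in> inner_edges G T \<Longrightarrow> ends G e \<subseteq> T"
  unfolding inner_edges_def by simp

lemma st_finV: "stable_graph g n G \<Longrightarrow> finite (verts G)" unfolding stable_graph_def by simp
lemma st_finE: "stable_graph g n G \<Longrightarrow> finite (edges G)" unfolding stable_graph_def by simp
lemma st_neV: "stable_graph g n G \<Longrightarrow> verts G \<noteq> {}" unfolding stable_graph_def by simp
lemma st_conn: "stable_graph g n G \<Longrightarrow> connected_sub G (verts G) (edges G)" unfolding stable_graph_def by simp
lemma st_genus: "stable_graph g n G \<Longrightarrow> sub_genus G (verts G) (edges G) = int g" unfolding stable_graph_def by simp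
lemma st_leg: "stable_graph g n G \<Longrightarrow> i \<in> {1..n} \<Longrightarrow> leg G i \<in> verts G" unfolding stable_graph_def by simp
lemma st_endsV: "stable_graph g n G \<Longrightarrow> e \<in> edges G \<Longrightarrow> ends G e \<subseteq> verts G"
  unfolding stable_graph_def by simp
lemma st_card: "stable_graph g n G \<Longrightarrow> e \<in> edges G \<Longrightarrow> card (ends G e) = 1 \<or> card (ends G e) = 2"
  unfolding stable_graph_def by simp
lemma st_ends_ne: "stable_graph g n G \<Longrightarrow> e \<in> edges G \<Longrightarrow> ends G e \<noteq> {}"
  using st_card by fastforce
lemma st_ends_fin: "stable_graph g n G \<Longrightarrow> e \<in> edges G \<Longrightarrow> finite (ends G e)"
  using st_card by (metis card.infinite zero_neq_numeral zero_neq_one)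
lemma st_ends_pq: "stable_graph g n G \<Longrightarrow> e \<in> edges G \<Longrightarrow> \<exists>p q. ends G e = {p,q}"
proof -
  assume a: "stable_graph g n G" "e \<in> edges G"
  from st_card[OF a] show ?thesis
  proof
    assume "card (ends G e) = 1"
    then obtain x where "ends G e = {x}" by (rule card_1_singletonE)
    then show ?thesis by auto
  next
    assume "card (ends G e) = 2"
    then show ?thesis by (auto simp: card_2_iff)
  qed
qed
lemma st_ends_le2: "stable_graph g n G \<Longrightarrow> e \<in> edges G \<Longrightarrow> card (ends G e) \<le> 2"
  using st_card by fastforce

lemma st_stab: "stable_graph g n G \<Longrightarrow> v \<in> verts G \<Longrightarrow> 2 * int (gen G v) - 2 + int (valence n G v) > 0"
  unfolding stable_graph_def by blast

lemma finite_inner: "stable_graph g n G \<Longrightarrow> finite (inner_edges G T)"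
  unfolding inner_edges_def using st_finE by simp

lemma finite_cutE: "stable_graph g n G \<Longrightarrow> finite (cutE G T)"
  unfolding cutE_def using st_finE by simp

lemma two_ends:
  assumes "stable_graph g n G" "e \<in> edges G" "a \<in> ends G e" "b \<in> ends G e" "a \<noteq> b"
  shows "ends G e = {a,b}"
proof -
  have "{a,b} \<subseteq> ends G e" using assms by auto
  moreover have "card {a,b} = 2" using assms by simp
  moreover have "card (ends G e) \<le> 2" using st_ends_le2 assms by blast
  ultimately show ?thesis using st_ends_fin[OF assms(1,2)]
    by (metis card_seteq)
qed

lemma tail_cut:
  assumes st: "stable_graph g n G" and t: "rational_tail G T"
  obtains e0 a b where "cutE G T = {e0}" "e0 \<in> edges G" "ends G e0 = {a,b}" "a \<in> T" "b \<in> verts G" "b \<notin> T"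
proof -
  have "card (cutE G T) = 1" using t rt_iff by blast
  then obtain e0 where e0: "cutE G T = {e0}" by (rule card_1_singletonE)
  then have e: "e0 \<in> edges G" "ends G e0 \<inter> T \<noteq> {}" "\<not> ends G e0 \<subseteq> T" unfolding cutE_def by auto
  then obtain a b where ab: "a \<in> ends G e0" "a \<in> T" "b \<in> ends G e0" "b \<notin> T" by blast
  then have "ends G e0 = {a,b}" using two_ends[OF st e(1)] by metis
  moreover have "b \<in> verts G" using st_endsV[OF st e(1)] ab by blast
  ultimately show ?thesis using that e0 e ab by blast
qed

lemma cut_unique:
  assumes "cutE G T = {e0}" "e \<in> edges G" "ends G e \<inter> T \<noteq> {}" "\<not> ends G e \<subseteq> T"
  shows "e = e0"
  using assms unfolding cutE_def by blast

lemma tail_sub: "rational_tail G T \<Longrightarrow> T \<subseteq> verts G" using rt_iff by blast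
lemma tail_ne: "rational_tail G T \<Longrightarrow> T \<noteq> {}" using rt_iff by blast
lemma tail_conn: "rational_tail G T \<Longrightarrow> connected_sub G T (inner_edges G T)" using rt_iff by blast
lemma tail_genus: "rational_tail G T \<Longrightarrow> sub_genus G T (inner_edges G T) = 0" using rt_iff by blast

lemma compl_conn:
  assumes st: "stable_graph g n G" and t: "rational_tail G T"
  shows "connected_sub G (verts G - T) (inner_edges G (verts G - T))"
proof -
  obtain e0 a b where c: "cutE G T = {e0}" "e0 \<in> edges G" "ends G e0 = {a,b}" "a \<in> T" "b \<in> verts G" "b \<notin> T"
    using tail_cut[OF st t] by blast
  have "connected_sub G (verts G - T) {e\<in>edges G. ends G e \<subseteq> verts G - T}"
  proof (rule conn_part[OF st_conn[OF st]])
    show "verts G - T \<subseteq> verts G" by blast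
    show "b \<in> verts G - T" using c by blast
    show "\<forall>e\<in>edges G. \<forall>p q. ends G e = {p, q} \<and> p \<in> verts G - T \<and> q \<in> verts G - (verts G - T) \<longrightarrow> p = b"
    proof (intro ballI allI impI)
      fix e p q assume e: "e \<in> edges G" and h: "ends G e = {p, q} \<and> p \<in> verts G - T \<and> q \<in> verts G - (verts G - T)"
      then have "e = e0" using cut_unique[OF c(1) e] by auto
      then show "p = b" using h c by (metis DiffD2 doubleton_eq_iff)
    qed
  qed
  then show ?thesis unfolding inner_edges_def by simp
qed

lemma edges_part:
  assumes st: "stable_graph g n G" and T: "T \<subseteq> verts G"
  shows "edges G = inner_edges G T \<union> inner_edges G (verts G - T) \<union> cutE G T"
    "inner_edges G T \<inter> inner_edges G (verts G - T) = {}"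
    "inner_edges G T \<inter> cutE G T = {}"
    "inner_edges G (verts G - T) \<inter> cutE G T = {}"
  using st_endsV[OF st] st_ends_ne[OF st] unfolding inner_edges_def cutE_def by blast+

lemma compl_genus:
  assumes st: "stable_graph g n G" and T: "T \<subseteq> verts G"
  shows "int g = sub_genus G T (inner_edges G T) + sub_genus G (verts G - T) (inner_edges G (verts G - T))
     + int (card (cutE G T)) - 1"
proof -
  have V: "verts G = T \<union> (verts G - T)" using T by blast
  have "int g = sub_genus G (verts G) (edges G)" using st_genus[OF st] by simp
  also have "\<dots> = sub_genus G (T \<union> (verts G - T)) (inner_edges G T \<union> inner_edges G (verts G - T) \<union> cutE G T)"
    using edges_part(1)[OF st T] V by simp
  also have "\<dots> = sub_genus G T (inner_edges G T) + sub_genus G (verts G - T) (inner_edges G (verts G - T))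
     + int (card (cutE G T)) - 1"
    by (rule genus_split) (use st_finV[OF st] T finite_subset finite_inner[OF st] finite_cutE[OF st] edges_part[OF st T] in auto)
  finally show ?thesis .
qed

lemma cutE_compl:
  assumes st: "stable_graph g n G" and T: "T \<subseteq> verts G"
  shows "cutE G (verts G - T) = cutE G T"
  using st_endsV[OF st] unfolding cutE_def by blast

lemma compl_tail_genus:
  assumes st: "stable_graph g n G" and t: "rational_tail G T"
  shows "sub_genus G (verts G - T) (inner_edges G (verts G - T)) = int g"
  using compl_genus[OF st tail_sub[OF t]] t rt_iff by simp

lemma compl_tail0:
  assumes st: "stable_graph 0 n G" and t: "rational_tail G T"
  shows "rational_tail G (verts G - T)"
proof -
  obtain e0 a b where c: "cutE G T = {e0}" "e0 \<in> edges G" "ends G e0 = {a,b}" "a \<in> T" "b \<in> verts G" "b \<notin> T"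
    using tail_cut[OF st t] by blast
  show ?thesis unfolding rt_iff
    using compl_conn[OF st t] compl_tail_genus[OF st t] cutE_compl[OF st tail_sub[OF t]] t rt_iff c by auto
qed

lemma marks_compl:
  assumes st: "stable_graph g n G"
  shows "marks n G (verts G - T) = {1..n} - marks n G T"
  using st_leg[OF st] unfolding marks_def by auto

lemma marks_sub: "marks n G T \<subseteq> {1..n}" unfolding marks_def by auto

lemma marks_mono: "T \<subseteq> T' \<Longrightarrow> marks n G T \<subseteq> marks n G T'" unfolding marks_def by auto

lemma sum_ind_card: "finite T \<Longrightarrow> (\<Sum>v\<in>T. if v \<in> X then 1 else 0) = card (T \<inter> X)"
proof -
  assume f: "finite T"
  have "(\<Sum>v\<in>T. if v \<in> X then 1 else (0::nat)) = (\<Sum>v\<in>{v\<in>T. v \<in> X}. 1)"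
    using sum.inter_filter[OF f, of "\<lambda>_. 1::nat" "\<lambda>v. v \<in> X"] by simp
  also have "\<dots> = card (T \<inter> X)" by (simp add: Collect_conj_eq Int_commute)
  finally show ?thesis .
qed

lemma edge_val_bound:
  assumes st: "stable_graph g n G" and e: "e \<in> edges G" and fT: "finite T"
  shows "(\<Sum>v\<in>T. (if ends G e = {v} then 2 else if v \<in> ends G e then 1 else 0::nat))
     \<le> (if e \<in> inner_edges G T then 2 else 0) + (if e \<in> cutE G T then 1 else 0)"
proof (cases "\<exists>x. ends G e = {x}")
  case True
  then obtain x where x: "ends G e = {x}" by blast
  have "(\<Sum>v\<in>T. (if ends G e = {v} then 2 else if v \<in> ends G e then 1 else 0::nat))
      = (\<Sum>v\<in>T. (if v \<in> {x} then 2 else 0))"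
    using x by (intro sum.cong) auto
  also have "\<dots> = 2 * (\<Sum>v\<in>T. (if v \<in> {x} then 1 else 0))"
    by (subst sum_distrib_left) (intro sum.cong; simp)
  also have "\<dots> = 2 * card (T \<inter> {x})" using sum_ind_card[OF fT, of "{x}"] by (simp del: insert_iff singleton_iff)
  finally show ?thesis using x e unfolding inner_edges_def by (cases "x \<in> T") auto
next
  case False
  have "(\<Sum>v\<in>T. (if ends G e = {v} then 2 else if v \<in> ends G e then 1 else 0::nat))
      = (\<Sum>v\<in>T. (if v \<in> ends G e then 1 else 0))"
    using False by (intro sum.cong) auto
  also have "\<dots> = card (T \<inter> ends G e)" using sum_ind_card[OF fT] by simp
  finally have eq: "(\<Sum>v\<in>T. (if ends G e = {v} then 2 else if v \<in> ends G e then 1 else 0::nat)) = card (T \<inter> ends G e)" .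
  have le2: "card (T \<inter> ends G e) \<le> 2"
    using st_ends_le2[OF st e] card_mono[OF st_ends_fin[OF st e], of "T \<inter> ends G e"] by auto
  show ?thesis
  proof (cases "ends G e \<subseteq> T")
    case True then show ?thesis using eq le2 e unfolding inner_edges_def by auto
  next
    case nsub: False
    show ?thesis
    proof (cases "ends G e \<inter> T = {}")
      case True then show ?thesis using eq by (simp add: Int_commute)
    next
      case False
      then have cut: "e \<in> cutE G T" using nsub e unfolding cutE_def by auto
      have "T \<inter> ends G e \<subset> ends G e" using nsub by blast
      then have "card (T \<inter> ends G e) < card (ends G e)" using psubset_card_mono st_ends_fin[OF st e] by blast
      then show ?thesis using eq st_ends_le2[OF st e] cut nsub e unfolding inner_edges_def by auto
    qed
  qed
qed

lemma tail_marks: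
  assumes st: "stable_graph g n G" and t: "rational_tail G T"
  shows "card (marks n G T) \<ge> 2"
proof -
  have TV: "T \<subseteq> verts G" using t rt_iff by blast
  have fT: "finite T" using st_finV[OF st] TV finite_subset by blast
  obtain r where r: "r \<in> T" using t rt_iff by blast
  let ?ET = "inner_edges G T"
  have fET: "finite ?ET" using finite_inner[OF st] .
  have "card (T - {r}) \<le> card {e\<in>?ET. \<not> ends G e \<subseteq> {r}}"
    using forest[OF fT fET, where R="{r}"] r tail_conn[OF t] inner_ends unfolding connected_sub_def by blast
  also have "\<dots> \<le> card ?ET" using fET by (intro card_mono) auto
  finally have cE: "card T \<le> card ?ET + 1" using r fT by (simp add: card_Diff_singleton)
  have g0: "(\<Sum>v\<in>T. int (gen G v)) + int (card ?ET) - int (card T) + 1 = 0"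
    using tail_genus[OF t] unfolding sub_genus_def by simp
  have "(\<Sum>v\<in>T. int (gen G v)) \<ge> 0" by (simp add: sum_nonneg)
  then have sg: "(\<Sum>v\<in>T. int (gen G v)) = 0" and cE2: "int (card ?ET) = int (card T) - 1"
    using g0 cE by linarith+
  have gen0: "\<forall>v\<in>T. gen G v = 0"
  proof
    fix v assume v: "v \<in> T"
    have "(\<Sum>v\<in>T. gen G v) = 0" using sg by (metis of_nat_0 of_nat_eq_iff of_nat_sum)
    then show "gen G v = 0" using v fT by simp
  qed
  have val3: "\<forall>v\<in>T. valence n G v \<ge> 3"
  proof
    fix v assume v: "v \<in> T"
    then have "2 * int (gen G v) - 2 + int (valence n G v) > 0" using st_stab[OF st] TV by blast
    then show "valence n G v \<ge> 3" using gen0 v by simp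
  qed
  let ?c = "\<lambda>e v. (if ends G e = {v} then 2 else if v \<in> ends G e then 1 else 0::nat)"
  have legs: "(\<Sum>v\<in>T. card {i\<in>{1..n}. leg G i = v}) = card (marks n G T)"
  proof -
    have "marks n G T = (\<Union>v\<in>T. {i\<in>{1..n}. leg G i = v})" unfolding marks_def by auto
    moreover have "card (\<Union>v\<in>T. {i\<in>{1..n}. leg G i = v}) = (\<Sum>v\<in>T. card {i\<in>{1..n}. leg G i = v})"
      by (rule card_UN_disjoint) (use fT in auto)
    ultimately show ?thesis by simp
  qed
  have "(\<Sum>v\<in>T. (\<Sum>e\<in>edges G. ?c e v)) = (\<Sum>e\<in>edges G. (\<Sum>v\<in>T. ?c e v))"
    by (rule sum.swap)
  also have "\<dots> \<le> (\<Sum>e\<in>edges G. (if e \<in> ?ET then 2 else 0) + (if e \<in> cutE G T then 1 else 0))"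
    by (intro sum_mono edge_val_bound[OF st _ fT])
  also have "\<dots> = (\<Sum>e\<in>edges G. (if e \<in> ?ET then 2 else 0)) + (\<Sum>e\<in>edges G. (if e \<in> cutE G T then 1 else 0))"
    by (simp add: sum.distrib)
  also have "\<dots> = 2 * card ?ET + card (cutE G T)"
  proof -
    have a: "(\<Sum>e\<in>edges G. (if e \<in> ?ET then 2 else 0::nat)) = (\<Sum>e\<in>{e\<in>edges G. e \<in> ?ET}. 2)"
      using sum.inter_filter[OF st_finE[OF st], of "\<lambda>_. 2::nat" "\<lambda>e. e \<in> ?ET"] by simp
    have b: "(\<Sum>e\<in>edges G. (if e \<in> cutE G T then 1 else 0::nat)) = (\<Sum>e\<in>{e\<in>edges G. e \<in> cutE G T}. 1)"
      using sum.inter_filter[OF st_finE[OF st], of "\<lambda>_. 1::nat" "\<lambda>e. e \<in> cutE G T"] by simp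
    have "{e\<in>edges G. e \<in> ?ET} = ?ET" unfolding inner_edges_def by auto
    moreover have "{e\<in>edges G. e \<in> cutE G T} = cutE G T" unfolding cutE_def by auto
    ultimately show ?thesis using a b by simp
  qed
  finally have s1: "(\<Sum>v\<in>T. (\<Sum>e\<in>edges G. ?c e v)) \<le> 2 * card ?ET + 1" using t rt_iff by simp
  have "(\<Sum>v\<in>T. valence n G v) = (\<Sum>v\<in>T. (\<Sum>e\<in>edges G. ?c e v)) + (\<Sum>v\<in>T. card {i\<in>{1..n}. leg G i = v})"
    unfolding valence_def by (simp add: sum.distrib)
  then have s2: "(\<Sum>v\<in>T. valence n G v) \<le> 2 * card ?ET + 1 + card (marks n G T)" using s1 legs by simp
  have "(\<Sum>v\<in>T. valence n G v) \<ge> (\<Sum>v\<in>T. 3)" using val3 by (intro sum_mono) auto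
  then have "3 * card T \<le> 2 * card ?ET + 1 + card (marks n G T)" using s2 by simp
  moreover have "card T \<ge> 1" using r fT by (metis One_nat_def Suc_leI card_gt_0_iff empty_iff)
  ultimately show ?thesis using cE2 by linarith
qed


lemma inside_cut:
  assumes t1: "rational_tail G T1" and c2: "cutE G T2 = {e2}"
    and i: "T1 \<inter> T2 \<noteq> {}" and ns: "\<not> T1 \<subseteq> T2"
  shows "ends G e2 \<subseteq> T1"
proof -
  obtain x where x: "x \<in> T1" "x \<in> T2" using i by blast
  obtain y where y: "y \<in> T1" "y \<notin> T2" using ns by blast
  obtain e p q where e: "e \<in> inner_edges G T1" "ends G e = {p,q}" "p \<in> T2" "q \<notin> T2"
    using cross_conn[OF tail_conn[OF t1] x(1) x(2) y(1) y(2)] by blast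
  have "e \<in> edges G" using e unfolding inner_edges_def by simp
  then have "e = e2" using cut_unique[OF c2] e by auto
  then show ?thesis using e inner_ends by blast
qed

lemma tail_pair:
  assumes st: "stable_graph g n G" and t1: "rational_tail G T1" and t2: "rational_tail G T2"
  shows "T1 \<subseteq> T2 \<or> T2 \<subseteq> T1 \<or> verts G = T1 \<union> T2 \<or>
    (T1 \<inter> T2 = {} \<and> (\<forall>e\<in>edges G. \<not> (ends G e \<inter> T1 \<noteq> {} \<and> ends G e \<inter> T2 \<noteq> {})))"
proof -
  obtain e1 a1 b1 where c1: "cutE G T1 = {e1}" "e1 \<in> edges G" "ends G e1 = {a1,b1}" "a1 \<in> T1" "b1 \<in> verts G" "b1 \<notin> T1"
    using tail_cut[OF st t1] by blast
  obtain e2 a2 b2 where c2: "cutE G T2 = {e2}" "e2 \<in> edges G" "ends G e2 = {a2,b2}" "a2 \<in> T2" "b2 \<in> verts G" "b2 \<notin> T2"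
    using tail_cut[OF st t2] by blast
  have V1: "T1 \<subseteq> verts G" and V2: "T2 \<subseteq> verts G" using t1 t2 tail_sub by auto
  have C1: "connected_sub G (verts G - T1) (inner_edges G (verts G - T1))" using compl_conn[OF st t1] .
  show ?thesis
  proof (cases "T1 \<subseteq> T2 \<or> T2 \<subseteq> T1")
    case True then show ?thesis by blast
  next
    case nn: False
    show ?thesis
    proof (cases "T1 \<inter> T2 = {}")
      case False
      have s2: "ends G e2 \<subseteq> T1" using inside_cut[OF t1 c2(1) False] nn by blast
      have s1: "ends G e1 \<subseteq> T2" using inside_cut[OF t2 c1(1)] False nn by blast
      have "verts G = T1 \<union> T2"
      proof (rule ccontr)
        assume "verts G \<noteq> T1 \<union> T2"
        then obtain x where x: "x \<in> verts G" "x \<notin> T1" "x \<notin> T2" using V1 V2 by blast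
        have b1: "b1 \<in> verts G - T1" "b1 \<in> T2" using c1 s1 by auto
        obtain e p q where e: "e \<in> inner_edges G (verts G - T1)" "ends G e = {p,q}" "p \<in> T2" "q \<notin> T2"
          using cross_conn[OF C1 b1(1) b1(2), of x] x by blast
        have "e \<in> edges G" using e unfolding inner_edges_def by simp
        then have "e = e2" using cut_unique[OF c2(1)] e by auto
        then show False using e inner_ends s2 c2(3) by blast
      qed
      then show ?thesis by blast
    next
      case disj: True
      show ?thesis
      proof (cases "\<forall>e\<in>edges G. \<not> (ends G e \<inter> T1 \<noteq> {} \<and> ends G e \<inter> T2 \<noteq> {})")
        case True then show ?thesis using disj by blast
      next
        case False
        then obtain e where e: "e \<in> edges G" "ends G e \<inter> T1 \<noteq> {}" "ends G e \<inter> T2 \<noteq> {}" by blast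
        have "\<not> ends G e \<subseteq> T1" "\<not> ends G e \<subseteq> T2" using e disj by auto
        then have ee: "e = e1" "e = e2" using cut_unique[OF c1(1) e(1)] cut_unique[OF c2(1) e(1)] e by auto
        have "verts G = T1 \<union> T2"
        proof (rule ccontr)
          assume "verts G \<noteq> T1 \<union> T2"
          then obtain x where x: "x \<in> verts G" "x \<notin> T1" "x \<notin> T2" using V1 V2 by blast
          have a2: "a2 \<in> verts G - T1" "a2 \<in> T2" using c2 disj V2 by auto
          obtain e' p q where e': "e' \<in> inner_edges G (verts G - T1)" "ends G e' = {p,q}" "p \<in> T2" "q \<notin> T2"
            using cross_conn[OF C1 a2(1) a2(2), of x] x by blast
          have "e' \<in> edges G" using e' unfolding inner_edges_def by simp
          then have "e' = e2" using cut_unique[OF c2(1)] e' by auto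
          then show False using e' inner_ends ee e(2) by blast
        qed
        then show ?thesis by blast
      qed
    qed
  qed
qed

definition goodK :: "nat \<Rightarrow> nat \<Rightarrow> nat set set \<Rightarrow> bool" where
  "goodK g n K \<longleftrightarrow> simplicial_complex n K \<and> (g = 0 \<longrightarrow> at_least_triparted n K)"

lemma goodK_down: "goodK g n K \<Longrightarrow> A \<in> K \<Longrightarrow> B \<subseteq> A \<Longrightarrow> B \<in> K"
  unfolding goodK_def simplicial_complex_def by blast

lemma KK:
  assumes st: "stable_graph g n G" and gK: "goodK g n K"
    and t1: "rational_tail G T1" and m1: "marks n G T1 \<in> K"
    and t2: "rational_tail G T2" and m2: "marks n G T2 \<in> K"
  shows "verts G \<noteq> T1 \<union> T2"
proof
  assume V: "verts G = T1 \<union> T2"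
  obtain e1 a1 b1 where c1: "cutE G T1 = {e1}" "e1 \<in> edges G" "ends G e1 = {a1,b1}" "a1 \<in> T1" "b1 \<in> verts G" "b1 \<notin> T1"
    using tail_cut[OF st t1] by blast
  have CT2: "verts G - T1 \<subseteq> T2" using V by blast
  show False
  proof (cases "g = 0")
    case False
    have fT2: "finite T2" using st_finV[OF st] tail_sub[OF t2] finite_subset by blast
    have "sub_genus G (verts G - T1) {e\<in>inner_edges G T2. ends G e \<subseteq> verts G - T1} \<le> sub_genus G T2 (inner_edges G T2)"
      by (rule genus_mono[OF tail_conn[OF t2] fT2 finite_inner[OF st]]) (use inner_ends CT2 c1 in auto)
    moreover have "{e\<in>inner_edges G T2. ends G e \<subseteq> verts G - T1} = inner_edges G (verts G - T1)"
      using CT2 unfolding inner_edges_def by auto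
    ultimately have "int g \<le> 0" using compl_tail_genus[OF st t1] tail_genus[OF t2] by simp
    then show False using False by simp
  next
    case True
    then have st0: "stable_graph 0 n G" using st by simp
    have tc: "rational_tail G (verts G - T1)" using compl_tail0[OF st0 t1] .
    have mc: "marks n G (verts G - T1) \<in> K"
      using goodK_down[OF gK m2 marks_mono[OF CT2]] .
    have mc2: "marks n G (verts G - T1) = {1..n} - marks n G T1" using marks_compl[OF st] .
    let ?A = "marks n G T1" let ?B = "{1..n} - marks n G T1"
    have cA: "card ?A \<ge> 2" using tail_marks[OF st t1] .
    have cB: "card ?B \<ge> 2" using tail_marks[OF st tc] mc2 by simp
    have neA: "?A \<noteq> {}" using cA by (metis card.empty not_numeral_le_zero)
    have neB: "?B \<noteq> {}" using cB by (metis card.empty not_numeral_le_zero)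
    have AB: "?A \<noteq> ?B" using neA by blast
    have part: "set_partition {1..n} {?A, ?B}"
      unfolding set_partition_def using neA neB marks_sub[of n G T1] by auto
    have sub: "{?A, ?B} \<subseteq> K" using m1 mc mc2 by simp
    have "card {?A, ?B} \<ge> 3" using gK True part sub unfolding goodK_def at_least_triparted_def by blast
    then show False using AB by simp
  qed
qed

definition Kt :: "nat \<Rightarrow> nat set set \<Rightarrow> sgraph \<Rightarrow> nat set set" where
  "Kt n K G = {T. rational_tail G T \<and> marks n G T \<in> K}"

definition maxK :: "nat \<Rightarrow> nat set set \<Rightarrow> sgraph \<Rightarrow> nat set \<Rightarrow> bool" where
  "maxK n K G T \<longleftrightarrow> T \<in> Kt n K G \<and> (\<forall>T2\<in>Kt n K G. T \<subseteq> T2 \<longrightarrow> T2 = T)"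

lemma Kt_finite: "stable_graph g n G \<Longrightarrow> finite (Kt n K G)"
proof -
  assume st: "stable_graph g n G"
  have "Kt n K G \<subseteq> Pow (verts G)" unfolding Kt_def using tail_sub by blast
  then show ?thesis using st_finV[OF st] finite_subset by blast
qed

lemma exists_max:
  assumes st: "stable_graph g n G" and T: "T \<in> Kt n K G"
  shows "\<exists>M. maxK n K G M \<and> T \<subseteq> M"
proof -
  obtain M where M: "M \<in> Kt n K G" "T \<le> M" "\<forall>b\<in>Kt n K G. M \<le> b \<longrightarrow> M = b"
    using finite_has_maximal2[OF Kt_finite[OF st] T] by blast
  have "maxK n K G M" unfolding maxK_def using M by (metis (no_types))
  then show ?thesis using M(2) by blast
qed

lemma max_disj:
  assumes st: "stable_graph g n G" and gK: "goodK g n K"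
    and M1: "maxK n K G M1" and M2: "maxK n K G M2" and ne: "M1 \<noteq> M2"
  shows "M1 \<inter> M2 = {} \<and> (\<forall>e\<in>edges G. \<not> (ends G e \<inter> M1 \<noteq> {} \<and> ends G e \<inter> M2 \<noteq> {}))"
proof -
  have k1: "rational_tail G M1" "marks n G M1 \<in> K" and k2: "rational_tail G M2" "marks n G M2 \<in> K"
    using M1 M2 unfolding maxK_def Kt_def by auto
  have "\<not> M1 \<subseteq> M2" using M1 M2 ne unfolding maxK_def by blast
  moreover have "\<not> M2 \<subseteq> M1" using M1 M2 ne unfolding maxK_def by blast
  moreover have "verts G \<noteq> M1 \<union> M2" using KK[OF st gK k1 k2] .
  ultimately show ?thesis using tail_pair[OF st k1(1) k2(1)] by blast
qed

lemma Zof_stable: "stable_graph g n G \<Longrightarrow> Z_of g n K G = \<Union>(Kt n K G)"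
  unfolding Z_of_def Kt_def by simp

lemma Zof_max: "stable_graph g n G \<Longrightarrow> Z_of g n K G = \<Union>{M. maxK n K G M}"
proof -
  assume st: "stable_graph g n G"
  have "\<Union>(Kt n K G) = \<Union>{M. maxK n K G M}"
  proof (rule equalityI; rule subsetI)
    fix x assume "x \<in> \<Union>(Kt n K G)"
    then obtain T where T: "T \<in> Kt n K G" "x \<in> T" by blast
    obtain M where "maxK n K G M" "T \<subseteq> M" using exists_max[OF st T(1)] by blast
    then show "x \<in> \<Union>{M. maxK n K G M}" using T by blast
  next
    fix x assume "x \<in> \<Union>{M. maxK n K G M}"
    then show "x \<in> \<Union>(Kt n K G)" unfolding maxK_def by blast
  qed
  then show ?thesis using Zof_stable[OF st] by simp
qed

lemma Zof_ne:
  assumes st: "stable_graph g n G" and gK: "goodK g n K"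
  shows "Z_of g n K G \<noteq> verts G"
proof
  assume Z: "Z_of g n K G = verts G"
  show False
  proof (cases "Kt n K G = {}")
    case True
    then show False using Z Zof_stable[OF st] st_neV[OF st] by simp
  next
    case False
    then obtain T where "T \<in> Kt n K G" by blast
    then obtain M where M: "maxK n K G M" using exists_max[OF st] by blast
    then have tM: "rational_tail G M" unfolding maxK_def Kt_def by simp
    obtain e a b where c: "cutE G M = {e}" "e \<in> edges G" "ends G e = {a,b}" "a \<in> M" "b \<in> verts G" "b \<notin> M"
      using tail_cut[OF st tM] by blast
    have "b \<in> \<Union>{M. maxK n K G M}" using Z Zof_max[OF st] c by simp
    then obtain M2 where M2: "maxK n K G M2" "b \<in> M2" by blast
    then have "M \<noteq> M2" using c by blast
    then show False using max_disj[OF st gK M M2(1)] c M2 by blast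
  qed
qed

lemma Zof_supp:
  assumes gK: "goodK g n K"
  shows "supported_on_rational_tails g n (Z_of g n K)"
  unfolding supported_on_rational_tails_def
proof (intro allI impI)
  fix G assume st: "stable_graph g n G"
  show "\<exists>\<T>. (\<forall>T\<in>\<T>. rational_tail G T) \<and>
             (\<forall>T1\<in>\<T>. \<forall>T2\<in>\<T>. T1 \<noteq> T2 \<longrightarrow>
                 T1 \<inter> T2 = {} \<and> (\<forall>e\<in>edges G. \<not> (ends G e \<inter> T1 \<noteq> {} \<and> ends G e \<inter> T2 \<noteq> {}))) \<and>
             \<Union>\<T> = Z_of g n K G"
  proof (rule exI[of _ "{M. maxK n K G M}"], intro conjI)
    show "\<forall>T\<in>{M. maxK n K G M}. rational_tail G T" unfolding maxK_def Kt_def by blast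
    show "\<forall>T1\<in>{M. maxK n K G M}. \<forall>T2\<in>{M. maxK n K G M}. T1 \<noteq> T2 \<longrightarrow>
                 T1 \<inter> T2 = {} \<and> (\<forall>e\<in>edges G. \<not> (ends G e \<inter> T1 \<noteq> {} \<and> ends G e \<inter> T2 \<noteq> {}))"
      using max_disj[OF st gK] by blast
    show "\<Union>{M. maxK n K G M} = Z_of g n K G" using Zof_max[OF st] by simp
  qed
qed


locale contr =
  fixes g n G' G S f h
  assumes st': "stable_graph g n G'" and st: "stable_graph g n G" and ct: "contraction n G' G S f h"
begin

lemma c_S: "S \<subseteq> edges G'" using ct unfolding contraction_def by simp
lemma c_surj: "f ` verts G' = verts G" using ct unfolding contraction_def by simp
lemma c_bij: "bij_betw h (edges G' - S) (edges G)" using ct unfolding contraction_def by simp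
lemma c_ends: "e \<in> edges G' - S \<Longrightarrow> ends G (h e) = f ` ends G' e" using ct unfolding contraction_def by simp
lemma c_Sends: "e \<in> S \<Longrightarrow> card (f ` ends G' e) = 1" using ct unfolding contraction_def by simp
lemma c_leg: "i \<in> {1..n} \<Longrightarrow> leg G i = f (leg G' i)" using ct unfolding contraction_def by simp
lemma c_fconn: "v \<in> verts G \<Longrightarrow> connected_sub G' (fiber G' f v) {e\<in>S. ends G' e \<subseteq> fiber G' f v}"
  using ct unfolding contraction_def by simp
lemma c_fgen: "v \<in> verts G \<Longrightarrow> int (gen G v) = sub_genus G' (fiber G' f v) {e\<in>S. ends G' e \<subseteq> fiber G' f v}"
  using ct unfolding contraction_def by simp

lemma fiber_iff: "u \<in> fiber G' f x \<longleftrightarrow> u \<in> verts G' \<and> f u = x"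
  unfolding fiber_def by simp

lemma f_in: "u \<in> verts G' \<Longrightarrow> f u \<in> verts G" using c_surj by blast

lemma fiber_fin: "finite (fiber G' f x)"
  using st_finV[OF st'] unfolding fiber_def by simp

lemma fiber_ne: "x \<in> verts G \<Longrightarrow> fiber G' f x \<noteq> {}"
proof -
  assume x: "x \<in> verts G"
  then obtain u where "u \<in> verts G'" "f u = x" using c_surj by (metis imageE)
  then show ?thesis unfolding fiber_def by blast
qed

lemma S_fiber: "e \<in> S \<Longrightarrow> \<exists>x\<in>verts G. ends G' e \<subseteq> fiber G' f x"
proof -
  assume e: "e \<in> S"
  then obtain x where x: "f ` ends G' e = {x}" using c_Sends card_1_singletonE by blast
  have eE: "e \<in> edges G'" using e c_S by blast
  obtain p where p: "p \<in> ends G' e" using st_ends_ne[OF st' eE] by blast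
  have pV: "p \<in> verts G'" using p st_endsV[OF st' eE] by blast
  have "f p \<in> {x}" using x p by (metis imageI)
  then have "x = f p" by simp
  then have "x \<in> verts G" using f_in pV by simp
  moreover have "ends G' e \<subseteq> fiber G' f x" using x st_endsV[OF st' eE] unfolding fiber_def by blast
  ultimately show ?thesis by blast
qed

lemma S_same: "e \<in> S \<Longrightarrow> p \<in> ends G' e \<Longrightarrow> q \<in> ends G' e \<Longrightarrow> f p = f q"
  using S_fiber unfolding fiber_def by blast

lemma h_filter: "bij_betw h {e\<in>edges G' - S. P (f ` ends G' e)} {e\<in>edges G. P (ends G e)}"
proof -
  have inj: "inj_on h {e\<in>edges G' - S. P (f ` ends G' e)}"
  proof -
    have "inj_on h (edges G' - S)" using c_bij unfolding bij_betw_def by simp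
    then show ?thesis by (rule inj_on_subset) blast
  qed
  have "h ` {e\<in>edges G' - S. P (f ` ends G' e)} = {e\<in>edges G. P (ends G e)}"
  proof (rule equalityI; rule subsetI)
    fix e assume "e \<in> h ` {e\<in>edges G' - S. P (f ` ends G' e)}"
    then obtain e' where e': "e' \<in> edges G' - S" "P (f ` ends G' e')" "e = h e'" by blast
    have "h e' \<in> edges G" using c_bij e'(1) bij_betwE by blast
    moreover have "ends G (h e') = f ` ends G' e'" using c_ends e'(1) by blast
    ultimately show "e \<in> {e\<in>edges G. P (ends G e)}" using e' by simp
  next
    fix e assume e: "e \<in> {e\<in>edges G. P (ends G e)}"
    then obtain e' where e': "e' \<in> edges G' - S" "e = h e'"
      using c_bij unfolding bij_betw_def by blast
    then show "e \<in> h ` {e\<in>edges G' - S. P (f ` ends G' e)}" using e c_ends by auto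
  qed
  then show ?thesis using inj unfolding bij_betw_def by blast
qed

definition pre :: "nat set \<Rightarrow> nat set" where "pre T = {u\<in>verts G'. f u \<in> T}"

lemma pre_sub: "pre T \<subseteq> verts G'" unfolding pre_def by auto

lemma pre_marks: "marks n G' (pre T) = marks n G T"
  unfolding marks_def pre_def using c_leg st_leg[OF st'] by auto

lemma pre_ne: "T \<subseteq> verts G \<Longrightarrow> (pre T \<noteq> {}) = (T \<noteq> {})"
proof
  assume "pre T \<noteq> {}" then show "T \<noteq> {}" unfolding pre_def by auto
next
  assume T: "T \<subseteq> verts G" and "T \<noteq> {}"
  then obtain x where x: "x \<in> T" by blast
  then obtain u where "u \<in> fiber G' f x" using fiber_ne T by blast
  then have "u \<in> pre T" using x unfolding fiber_def pre_def by auto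
  then show "pre T \<noteq> {}" by blast
qed

lemma ends_pre: "e \<in> edges G' \<Longrightarrow> (ends G' e \<subseteq> pre T) = (f ` ends G' e \<subseteq> T)"
  using st_endsV[OF st'] unfolding pre_def by blast

lemma ends_pre2: "e \<in> edges G' \<Longrightarrow> (ends G' e \<inter> pre T \<noteq> {}) = (f ` ends G' e \<inter> T \<noteq> {})"
  using st_endsV[OF st'] unfolding pre_def by blast

lemma pre_cut: "card (cutE G' (pre T)) = card (cutE G T)"
proof -
  have "cutE G' (pre T) = {e\<in>edges G' - S. (\<lambda>X. X \<inter> T \<noteq> {} \<and> \<not> X \<subseteq> T) (f ` ends G' e)}"
  proof (rule equalityI; rule subsetI)
    fix e assume e: "e \<in> cutE G' (pre T)"
    then have eE: "e \<in> edges G'" unfolding cutE_def by simp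
    have nS: "e \<notin> S"
    proof
      assume eS: "e \<in> S"
      then obtain x where x: "ends G' e \<subseteq> fiber G' f x" using S_fiber by blast
      show False
      proof (cases "x \<in> T")
        case True
        then have "ends G' e \<subseteq> pre T" using x unfolding fiber_def pre_def by auto
        then show False using e unfolding cutE_def by simp
      next
        case False
        then have "ends G' e \<inter> pre T = {}" using x unfolding fiber_def pre_def by auto
        then show False using e unfolding cutE_def by simp
      qed
    qed
    then show "e \<in> {e\<in>edges G' - S. (\<lambda>X. X \<inter> T \<noteq> {} \<and> \<not> X \<subseteq> T) (f ` ends G' e)}"
      using e eE ends_pre ends_pre2 unfolding cutE_def by auto
  next
    fix e assume "e \<in> {e\<in>edges G' - S. (\<lambda>X. X \<inter> T \<noteq> {} \<and> \<not> X \<subseteq> T) (f ` ends G' e)}"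
    then show "e \<in> cutE G' (pre T)" using ends_pre ends_pre2 unfolding cutE_def by auto
  qed
  moreover have "cutE G T = {e\<in>edges G. (\<lambda>X. X \<inter> T \<noteq> {} \<and> \<not> X \<subseteq> T) (ends G e)}"
    unfolding cutE_def by simp
  moreover have "bij_betw h {e\<in>edges G' - S. (\<lambda>X. X \<inter> T \<noteq> {} \<and> \<not> X \<subseteq> T) (f ` ends G' e)}
      {e\<in>edges G. (\<lambda>X. X \<inter> T \<noteq> {} \<and> \<not> X \<subseteq> T) (ends G e)}" by (rule h_filter)
  ultimately show ?thesis by (simp only: bij_betw_same_card)
qed

lemma fibers_disj: "x \<noteq> y \<Longrightarrow> fiber G' f x \<inter> fiber G' f y = {}"
  unfolding fiber_def by auto

lemma pre_union: "pre T = (\<Union>x\<in>T. fiber G' f x)"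
  unfolding pre_def fiber_def by auto

lemma Sx_disj: "x \<noteq> y \<Longrightarrow> {e\<in>S. ends G' e \<subseteq> fiber G' f x} \<inter> {e\<in>S. ends G' e \<subseteq> fiber G' f y} = {}"
proof -
  assume xy: "x \<noteq> y"
  { fix e assume e: "e \<in> S" "ends G' e \<subseteq> fiber G' f x" "ends G' e \<subseteq> fiber G' f y"
    have "ends G' e \<noteq> {}" using st_ends_ne[OF st'] c_S e by blast
    then have False using e fibers_disj[OF xy] by blast }
  then show ?thesis by blast
qed

lemma inner_pre:
  assumes T: "T \<subseteq> verts G"
  shows "inner_edges G' (pre T) = (\<Union>x\<in>T. {e\<in>S. ends G' e \<subseteq> fiber G' f x}) \<union> {e\<in>edges G' - S. f ` ends G' e \<subseteq> T}"
proof (rule equalityI; rule subsetI)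
  fix e assume e: "e \<in> inner_edges G' (pre T)"
  then have eE: "e \<in> edges G'" and sub: "ends G' e \<subseteq> pre T" unfolding inner_edges_def by auto
  show "e \<in> (\<Union>x\<in>T. {e\<in>S. ends G' e \<subseteq> fiber G' f x}) \<union> {e\<in>edges G' - S. f ` ends G' e \<subseteq> T}"
  proof (cases "e \<in> S")
    case True
    then obtain x where x: "ends G' e \<subseteq> fiber G' f x" using S_fiber by blast
    obtain p where p: "p \<in> ends G' e" using st_ends_ne[OF st' eE] by blast
    have "p \<in> pre T" "p \<in> fiber G' f x" using p x sub by auto
    then have "x \<in> T" unfolding fiber_def pre_def by auto
    then show ?thesis using True x by blast
  next
    case False
    have "f ` ends G' e \<subseteq> T" using ends_pre[OF eE] sub by simp
    then show ?thesis using eE False by blast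
  qed
next
  fix e assume e: "e \<in> (\<Union>x\<in>T. {e\<in>S. ends G' e \<subseteq> fiber G' f x}) \<union> {e\<in>edges G' - S. f ` ends G' e \<subseteq> T}"
  then show "e \<in> inner_edges G' (pre T)"
  proof
    assume "e \<in> (\<Union>x\<in>T. {e\<in>S. ends G' e \<subseteq> fiber G' f x})"
    then obtain x where x: "x \<in> T" "e \<in> S" "ends G' e \<subseteq> fiber G' f x" by blast
    have "fiber G' f x \<subseteq> pre T" using x(1) unfolding fiber_def pre_def by blast
    then show ?thesis using x c_S unfolding inner_edges_def by blast
  next
    assume a: "e \<in> {e\<in>edges G' - S. f ` ends G' e \<subseteq> T}"
    then have eE: "e \<in> edges G'" by simp
    have "ends G' e \<subseteq> pre T" using ends_pre[OF eE] a by simp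
    then show ?thesis using eE unfolding inner_edges_def by blast
  qed
qed

lemma pre_genus:
  assumes T: "T \<subseteq> verts G"
  shows "sub_genus G' (pre T) (inner_edges G' (pre T)) = sub_genus G T (inner_edges G T)"
proof -
  have fT: "finite T" using T st_finV[OF st] finite_subset by blast
  let ?F = "\<lambda>x. fiber G' f x"
  let ?Sx = "\<lambda>x. {e\<in>S. ends G' e \<subseteq> fiber G' f x}"
  let ?I2 = "{e\<in>edges G' - S. f ` ends G' e \<subseteq> T}"
  have fS: "finite S" using c_S st_finE[OF st'] finite_subset by blast
  have fSx: "\<forall>x. finite (?Sx x)" using fS by simp
  have fI2: "finite ?I2" using st_finE[OF st'] by simp
  have cI2: "card ?I2 = card (inner_edges G T)"
  proof -
    have "bij_betw h {e\<in>edges G' - S. (\<lambda>X. X \<subseteq> T) (f ` ends G' e)} {e\<in>edges G. (\<lambda>X. X \<subseteq> T) (ends G e)}"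
      by (rule h_filter)
    then show ?thesis unfolding inner_edges_def by (simp add: bij_betw_same_card)
  qed
  have cU: "card (\<Union>x\<in>T. ?Sx x) = (\<Sum>x\<in>T. card (?Sx x))"
    by (rule card_UN_disjoint) (use fT fS Sx_disj in auto)
  have disjI: "(\<Union>x\<in>T. ?Sx x) \<inter> ?I2 = {}" by blast
  have cinner: "card (inner_edges G' (pre T)) = (\<Sum>x\<in>T. card (?Sx x)) + card (inner_edges G T)"
    using inner_pre[OF T] card_Un_disjoint[OF _ fI2 disjI] cU cI2 fT fS by simp
  have cpre: "card (pre T) = (\<Sum>x\<in>T. card (?F x))"
    unfolding pre_union by (rule card_UN_disjoint) (use fT fiber_fin fibers_disj in auto)
  have spre: "(\<Sum>u\<in>pre T. int (gen G' u)) = (\<Sum>x\<in>T. (\<Sum>u\<in>?F x. int (gen G' u)))"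
    unfolding pre_union by (rule sum.UNION_disjoint) (use fT fiber_fin fibers_disj in auto)
  have sgen: "(\<Sum>x\<in>T. int (gen G x)) = (\<Sum>x\<in>T. (\<Sum>u\<in>?F x. int (gen G' u)) + int (card (?Sx x)) - int (card (?F x)) + 1)"
    using c_fgen T unfolding sub_genus_def by (intro sum.cong) auto
  also have "\<dots> = (\<Sum>x\<in>T. (\<Sum>u\<in>?F x. int (gen G' u))) + int (\<Sum>x\<in>T. card (?Sx x)) - int (\<Sum>x\<in>T. card (?F x)) + int (card T)"
    by (simp add: sum.distrib sum_subtractf)
  finally have sgen2: "(\<Sum>x\<in>T. int (gen G x)) = (\<Sum>x\<in>T. (\<Sum>u\<in>?F x. int (gen G' u))) + int (\<Sum>x\<in>T. card (?Sx x)) - int (\<Sum>x\<in>T. card (?F x)) + int (card T)" .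
  show ?thesis unfolding sub_genus_def using cinner cpre spre sgen2 by simp
qed

lemma lift_path:
  assumes T: "T \<subseteq> verts G" and xT0: "x \<in> T" and p: "(x,y) \<in> (adj G T (inner_edges G T))\<^sup>*"
  shows "\<forall>u1 u2. u1 \<in> fiber G' f x \<longrightarrow> u2 \<in> fiber G' f y \<longrightarrow> (u1,u2) \<in> (adj G' (pre T) (inner_edges G' (pre T)))\<^sup>*"
  using p
proof (induction rule: rtrancl_induct)
  case base
  have xT: "x \<in> T" using xT0 .
  show ?case
  proof (intro allI impI)
    fix u1 u2 assume u: "u1 \<in> fiber G' f x" "u2 \<in> fiber G' f x"
    show "(u1, u2) \<in> (adj G' (pre T) (inner_edges G' (pre T)))\<^sup>*"
    proof (cases "x \<in> verts G")
      case True
      have "(u1,u2) \<in> (adj G' (fiber G' f x) {e\<in>S. ends G' e \<subseteq> fiber G' f x})\<^sup>*"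
        using c_fconn[OF True] u unfolding connected_sub_def by blast
      moreover have "fiber G' f x \<subseteq> pre T" using xT unfolding fiber_def pre_def by auto
      moreover have "{e\<in>S. ends G' e \<subseteq> fiber G' f x} \<subseteq> inner_edges G' (pre T)"
        using c_S \<open>fiber G' f x \<subseteq> pre T\<close> unfolding inner_edges_def by blast
      ultimately show ?thesis using adj_rtrancl_mono by blast
    next
      case False
      then show ?thesis using u f_in fiber_iff by metis
    qed
  qed
next
  case (step y z)
  show ?case
  proof (cases "y = z")
    case True
    then show ?thesis using step(3) by simp
  next
    case yz: False
    obtain e where e: "e \<in> inner_edges G T" "ends G e = {y,z}" and yzT: "y \<in> T" "z \<in> T"
      using step(2) unfolding adj_iff by blast
    have eE: "e \<in> edges G" using e unfolding inner_edges_def by simp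
    have "e \<in> h ` (edges G' - S)" using c_bij eE unfolding bij_betw_def by simp
    then obtain e' where e': "e' \<in> edges G' - S" "h e' = e" by (metis imageE)
    have fe: "f ` ends G' e' = {y,z}" using c_ends[OF e'(1)] e' e by simp
    have "y \<in> f ` ends G' e'" "z \<in> f ` ends G' e'" using fe by auto
    then obtain p q where p: "p \<in> ends G' e'" "f p = y" and q: "q \<in> ends G' e'" "f q = z" by blast
    have pq: "p \<noteq> q"
    proof
      assume "p = q" then show False using p(2) q(2) yz by simp
    qed
    have e'E: "e' \<in> edges G'" using e' by simp
    have epq: "ends G' e' = {p,q}" using two_ends[OF st' e'E p(1) q(1) pq] .
    have pqV: "p \<in> verts G'" "q \<in> verts G'" using st_endsV[OF st' e'E] p q by auto
    have pqT: "p \<in> pre T" "q \<in> pre T" using p q yzT pqV unfolding pre_def by auto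
    have "ends G' e' \<subseteq> pre T" using epq pqT by simp
    then have inn: "e' \<in> inner_edges G' (pre T)" using e'E unfolding inner_edges_def by blast
    have adjpq: "(p,q) \<in> adj G' (pre T) (inner_edges G' (pre T))"
      unfolding adj_iff using inn epq pqT by blast
    show ?thesis
    proof (intro allI impI)
      fix u1 u2 assume u: "u1 \<in> fiber G' f x" "u2 \<in> fiber G' f z"
      have "p \<in> fiber G' f y" using p pqV fiber_iff by simp
      then have 1: "(u1,p) \<in> (adj G' (pre T) (inner_edges G' (pre T)))\<^sup>*" using step(3) u by blast
      have zV: "z \<in> verts G" using yzT(2) T by (rule subsetD[rotated])
      have qz: "q \<in> fiber G' f z" using q pqV fiber_iff by simp
      have "(q,u2) \<in> (adj G' (fiber G' f z) {e\<in>S. ends G' e \<subseteq> fiber G' f z})\<^sup>*"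
        using c_fconn[OF zV] u(2) qz unfolding connected_sub_def by blast
      moreover have fzs: "fiber G' f z \<subseteq> pre T" using yzT unfolding fiber_def pre_def by auto
      moreover have "{e\<in>S. ends G' e \<subseteq> fiber G' f z} \<subseteq> inner_edges G' (pre T)"
        using c_S fzs unfolding inner_edges_def by blast
      ultimately have 2: "(q,u2) \<in> (adj G' (pre T) (inner_edges G' (pre T)))\<^sup>*" using adj_rtrancl_mono by blast
      show "(u1, u2) \<in> (adj G' (pre T) (inner_edges G' (pre T)))\<^sup>*"
        using 1 adjpq 2 by (meson rtrancl_into_rtrancl rtrancl_trans)
    qed
  qed
qed

lemma proj_path:
  assumes p: "(u1,u2) \<in> (adj G' (pre T) (inner_edges G' (pre T)))\<^sup>*"
  shows "(f u1, f u2) \<in> (adj G T (inner_edges G T))\<^sup>*"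
  using p
proof (induction rule: rtrancl_induct)
  case base then show ?case by simp
next
  case (step y z)
  obtain e where e: "e \<in> inner_edges G' (pre T)" "ends G' e = {y,z}" and yz: "y \<in> pre T" "z \<in> pre T"
    using step(2) unfolding adj_iff by blast
  have eE: "e \<in> edges G'" using e unfolding inner_edges_def by simp
  show ?case
  proof (cases "e \<in> S")
    case True
    then have "f y = f z" using S_same e by blast
    then show ?thesis using step(3) by simp
  next
    case False
    then have e1: "e \<in> edges G' - S" using eE by simp
    have he: "ends G (h e) = {f y, f z}" using c_ends[OF e1] e by simp
    have hE: "h e \<in> edges G" using c_bij e1 bij_betwE by blast
    have fyz: "f y \<in> T" "f z \<in> T" using yz unfolding pre_def by auto
    have "h e \<in> inner_edges G T" using hE he fyz unfolding inner_edges_def by auto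
    then have "(f y, f z) \<in> adj G T (inner_edges G T)" unfolding adj_iff using he fyz by blast
    then show ?thesis using step(3) by (meson rtrancl_into_rtrancl)
  qed
qed

lemma pre_conn:
  assumes T: "T \<subseteq> verts G"
  shows "connected_sub G T (inner_edges G T) \<longleftrightarrow> connected_sub G' (pre T) (inner_edges G' (pre T))"
proof
  assume c: "connected_sub G T (inner_edges G T)"
  show "connected_sub G' (pre T) (inner_edges G' (pre T))" unfolding connected_sub_def
  proof (intro ballI)
    fix u1 u2 assume u: "u1 \<in> pre T" "u2 \<in> pre T"
    then have "(f u1, f u2) \<in> (adj G T (inner_edges G T))\<^sup>*" using c unfolding connected_sub_def pre_def by auto
    then show "(u1,u2) \<in> (adj G' (pre T) (inner_edges G' (pre T)))\<^sup>*"
    proof -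
      have "f u1 \<in> T" using u unfolding pre_def by simp
      then show ?thesis using lift_path[OF T \<open>f u1 \<in> T\<close>] u \<open>(f u1, f u2) \<in> _\<close> unfolding pre_def fiber_def by blast
    qed
  qed
next
  assume c: "connected_sub G' (pre T) (inner_edges G' (pre T))"
  show "connected_sub G T (inner_edges G T)" unfolding connected_sub_def
  proof (intro ballI)
    fix x1 x2 assume x: "x1 \<in> T" "x2 \<in> T"
    obtain u1 where u1: "u1 \<in> verts G'" "f u1 = x1" using c_surj x T by (metis imageE subsetD)
    obtain u2 where u2: "u2 \<in> verts G'" "f u2 = x2" using c_surj x T by (metis imageE subsetD)
    have "(u1,u2) \<in> (adj G' (pre T) (inner_edges G' (pre T)))\<^sup>*"
      using c u1 u2 x unfolding connected_sub_def pre_def by auto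
    then show "(x1,x2) \<in> (adj G T (inner_edges G T))\<^sup>*" using proj_path u1 u2 by blast
  qed
qed

lemma pre_tail:
  assumes T: "T \<subseteq> verts G"
  shows "rational_tail G T \<longleftrightarrow> rational_tail G' (pre T)"
  unfolding rt_iff using pre_conn[OF T] pre_genus[OF T] pre_cut pre_ne[OF T] pre_sub T by auto

lemma sat_pre:
  assumes T': "T' \<subseteq> verts G'" and sat: "\<forall>u\<in>T'. \<forall>u'\<in>verts G'. f u' = f u \<longrightarrow> u' \<in> T'"
  shows "pre (f ` T') = T'" "f ` T' \<subseteq> verts G"
  using T' sat f_in unfolding pre_def by auto

end


context contr
begin

lemma Z2_fwd:
  assumes v: "v \<in> verts G" and Z: "v \<in> Z_of g n K G"
  shows "fiber G' f v \<subseteq> Z_of g n K G'"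
proof -
  obtain T where T: "rational_tail G T" "marks n G T \<in> K" "v \<in> T"
    using Z Zof_stable[OF st] unfolding Kt_def by blast
  have TV: "T \<subseteq> verts G" using tail_sub[OF T(1)] .
  have t': "rational_tail G' (pre T)" using pre_tail[OF TV] T(1) by simp
  have m': "marks n G' (pre T) \<in> K" using pre_marks T(2) by simp
  have "fiber G' f v \<subseteq> pre T" using T(3) unfolding fiber_def pre_def by auto
  moreover have "pre T \<subseteq> Z_of g n K G'" using Zof_stable[OF st'] t' m' unfolding Kt_def by blast
  ultimately show ?thesis by blast
qed

lemma fiber_in_max:
  assumes gK: "goodK g n K" and v: "v \<in> verts G" and Z: "fiber G' f v \<subseteq> Z_of g n K G'"
  obtains M where "maxK n K G' M" "fiber G' f v \<subseteq> M"
proof -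
  obtain u0 where u0: "u0 \<in> fiber G' f v" using fiber_ne[OF v] by blast
  then have "u0 \<in> \<Union>(Kt n K G')" using Z Zof_stable[OF st'] by auto
  then obtain T0 where T0: "T0 \<in> Kt n K G'" "u0 \<in> T0" by blast
  obtain M where M: "maxK n K G' M" "T0 \<subseteq> M" using exists_max[OF st' T0(1)] by blast
  have "fiber G' f v \<subseteq> M"
  proof (rule ccontr)
    assume "\<not> fiber G' f v \<subseteq> M"
    then obtain y where y: "y \<in> fiber G' f v" "y \<notin> M" by blast
    have u0M: "u0 \<in> M" using M T0 by blast
    obtain e p q where e: "e \<in> {e\<in>S. ends G' e \<subseteq> fiber G' f v}" "ends G' e = {p,q}"
        "p \<in> fiber G' f v" "p \<in> M" "q \<in> fiber G' f v" "q \<notin> M"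
      using cross_conn[OF c_fconn[OF v] u0 u0M y] by blast
    have eE: "e \<in> edges G'" using e(1) c_S by blast
    have "q \<in> Z_of g n K G'" using e(5) Z by blast
    then have "q \<in> \<Union>{M. maxK n K G' M}" using Zof_max[OF st'] by simp
    then obtain M2 where M2: "maxK n K G' M2" "q \<in> M2" by blast
    have "M \<noteq> M2" using M2 e(6) by blast
    then have "\<not> (ends G' e \<inter> M \<noteq> {} \<and> ends G' e \<inter> M2 \<noteq> {})"
      using max_disj[OF st' gK M(1) M2(1)] eE by blast
    then show False using e(2,4) M2(2) by blast
  qed
  then show ?thesis using M that by blast
qed

lemma sat_tail:
  assumes v: "v \<in> verts G" and C: "rational_tail G' C" "marks n G' C \<in> K" "fiber G' f v \<subseteq> C"
    and sat: "\<forall>u\<in>C. \<forall>u'\<in>verts G'. f u' = f u \<longrightarrow> u' \<in> C"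
  shows "v \<in> Z_of g n K G"
proof -
  have CV: "C \<subseteq> verts G'" using tail_sub[OF C(1)] .
  have p: "pre (f ` C) = C" and TV: "f ` C \<subseteq> verts G" using sat_pre[OF CV sat] by auto
  have t: "rational_tail G (f ` C)" using pre_tail[OF TV] p C(1) by simp
  have m: "marks n G (f ` C) \<in> K" using pre_marks[of "f ` C"] p C(2) by simp
  obtain u0 where "u0 \<in> fiber G' f v" using fiber_ne[OF v] by blast
  then have "v \<in> f ` C" using C(3) fiber_iff by (metis imageI subsetD)
  then show ?thesis using Zof_stable[OF st] t m unfolding Kt_def by blast
qed

end


context contr
begin

lemma case_nS:
  assumes v: "v \<in> verts G" and M: "rational_tail G' M" "marks n G' M \<in> K" "fiber G' f v \<subseteq> M"
    and c: "cutE G' M = {e0}" and nS: "e0 \<notin> S"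
  shows "v \<in> Z_of g n K G"
proof (rule sat_tail[OF v M])
  show "\<forall>u\<in>M. \<forall>u'\<in>verts G'. f u' = f u \<longrightarrow> u' \<in> M"
  proof (intro ballI impI)
    fix u u' assume u: "u \<in> M" and u': "u' \<in> verts G'" and fu: "f u' = f u"
    show "u' \<in> M"
    proof (rule ccontr)
      assume nu: "u' \<notin> M"
      have uV: "u \<in> verts G'" using u tail_sub[OF M(1)] by blast
      have x: "f u \<in> verts G" using f_in[OF uV] .
      have uF: "u \<in> fiber G' f (f u)" using uV fiber_iff by simp
      have u'F: "u' \<in> fiber G' f (f u)" using u' fu fiber_iff by simp
      obtain e p q where e: "e \<in> {e\<in>S. ends G' e \<subseteq> fiber G' f (f u)}" "ends G' e = {p,q}"
          "p \<in> M" "q \<notin> M"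
        using cross_conn[OF c_fconn[OF x] uF u u'F nu] by blast
      have eE: "e \<in> edges G'" using e(1) c_S by blast
      have "e = e0" using cut_unique[OF c eE] e by auto
      then show False using e(1) nS by simp
    qed
  qed
qed

lemma case_S:
  assumes gK: "goodK g n K" and v: "v \<in> verts G"
    and M: "rational_tail G' M" "marks n G' M \<in> K" and FvM: "fiber G' f v \<subseteq> M"
    and c: "cutE G' M = {e0}" "e0 \<in> edges G'" "ends G' e0 = {a,b}" "a \<in> M" "b \<in> verts G'" "b \<notin> M"
    and eS: "e0 \<in> S"
  shows "v \<in> Z_of g n K G"
proof -
  have MV: "M \<subseteq> verts G'" using tail_sub[OF M(1)] .
  have aV: "a \<in> verts G'" using c MV by blast
  define w where "w = f a"
  have fb: "f b = w" using S_same[OF eS] c(3) unfolding w_def by simp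
  have wV: "w \<in> verts G" using f_in[OF aV] unfolding w_def .
  have aF: "a \<in> fiber G' f w" using aV fiber_iff w_def by simp
  have bF: "b \<in> fiber G' f w" using c(5) fb fiber_iff by simp
  have vw: "v \<noteq> w"
  proof
    assume "v = w" then have "b \<in> M" using bF FvM by blast
    then show False using c(6) by simp
  qed
  define X where "X = fiber G' f w \<inter> M"
  define Y where "Y = M - X"
  have aX: "a \<in> X" using aF c(4) X_def by simp
  obtain u0 where u0: "u0 \<in> fiber G' f v" using fiber_ne[OF v] by blast
  have u0V: "u0 \<in> verts G'" and fu0: "f u0 = v" using u0 fiber_iff by auto
  have nfw: "u \<notin> fiber G' f w" if "f u \<noteq> w" for u using that fiber_iff by simp
  have u0M: "u0 \<in> M" using u0 FvM by blast
  have u0Y: "u0 \<in> Y" using u0M nfw[of u0] fu0 vw unfolding Y_def X_def by blast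
  have sat_other: "\<forall>u'\<in>verts G'. f u' = f u \<longrightarrow> u' \<in> M" if u: "u \<in> M" "f u \<noteq> w" for u
  proof (intro ballI impI)
    fix u' assume u': "u' \<in> verts G'" and fu: "f u' = f u"
    show "u' \<in> M"
    proof (rule ccontr)
      assume nu: "u' \<notin> M"
      have uV: "u \<in> verts G'" using u MV by blast
      have x: "f u \<in> verts G" using f_in[OF uV] .
      have uF: "u \<in> fiber G' f (f u)" using uV fiber_iff by simp
      have u'F: "u' \<in> fiber G' f (f u)" using u' fu fiber_iff by simp
      obtain e p q where e: "e \<in> {e\<in>S. ends G' e \<subseteq> fiber G' f (f u)}" "ends G' e = {p,q}"
          "p \<in> M" "q \<notin> M"
        using cross_conn[OF c_fconn[OF x] uF u(1) u'F nu] by blast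
      have eE: "e \<in> edges G'" using e(1) c_S by blast
      have "e = e0" using cut_unique[OF c(1) eE] e by auto
      then have "ends G' e0 \<subseteq> fiber G' f (f u)" using e(1) by simp
      then have "a \<in> fiber G' f (f u)" using c(3) by simp
      then have "f a = f u" using fiber_iff by simp
      then show False using u(2) w_def by simp
    qed
  qed
  let ?R = "adj G' Y (inner_edges G' Y)"
  define C where "C = {u\<in>Y. (u0,u) \<in> ?R\<^sup>*}"
  have CY: "C \<subseteq> Y" unfolding C_def by blast
  have YM: "Y \<subseteq> M" unfolding Y_def by blast
  have CM: "C \<subseteq> M" using CY YM by blast
  have CX: "C \<inter> X = {}" using CY unfolding Y_def by blast
  have XM: "X \<subseteq> M" unfolding X_def by blast
  have fM: "finite M" using MV st_finV[OF st'] finite_subset by blast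
  have fC: "finite C" using CM fM finite_subset by blast
  have fX: "finite X" using XM fM finite_subset by blast
  have u0C: "u0 \<in> C" unfolding C_def using u0Y by simp
  have FvY: "fiber G' f v \<subseteq> Y"
  proof
    fix u assume u: "u \<in> fiber G' f v"
    then have "f u = v" using fiber_iff by simp
    then have "u \<notin> fiber G' f w" using nfw vw by simp
    then show "u \<in> Y" using u FvM unfolding Y_def X_def by blast
  qed
  have FvC: "fiber G' f v \<subseteq> C"
  proof
    fix u assume u: "u \<in> fiber G' f v"
    have "(u0,u) \<in> (adj G' (fiber G' f v) {e\<in>S. ends G' e \<subseteq> fiber G' f v})\<^sup>*"
      using c_fconn[OF v] u0 u unfolding connected_sub_def by blast
    moreover have "{e\<in>S. ends G' e \<subseteq> fiber G' f v} \<subseteq> inner_edges G' Y"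
      using c_S FvY unfolding inner_edges_def by blast
    ultimately have "(u0,u) \<in> ?R\<^sup>*" using adj_rtrancl_mono[OF FvY] by blast
    then show "u \<in> C" using u FvY unfolding C_def by blast
  qed
  have pathC: "(u0,z) \<in> (adj G' C (inner_edges G' C))\<^sup>*" if p: "(u0,z) \<in> ?R\<^sup>*" for z
    using p
  proof (induction rule: rtrancl_induct)
    case base then show ?case by simp
  next
    case (step y z)
    obtain e where e: "e \<in> inner_edges G' Y" "ends G' e = {y,z}" and yz: "y \<in> Y" "z \<in> Y"
      using step(2) unfolding adj_iff by blast
    have yC: "y \<in> C" unfolding C_def using yz step(1) by simp
    have "(u0,z) \<in> ?R\<^sup>*" using step(1) step(2) by (rule rtrancl_into_rtrancl)
    then have zC: "z \<in> C" unfolding C_def using yz(2) by simp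
    have "ends G' e \<subseteq> C" using e(2) yC zC by simp
    then have inn: "e \<in> inner_edges G' C" using e(1) unfolding inner_edges_def by simp
    have "(y,z) \<in> adj G' C (inner_edges G' C)" unfolding adj_iff
      by (rule conjI[OF yC conjI[OF zC bexI[where P="\<lambda>e. ends G' e = {y,z}", OF e(2) inn]]])
    then show ?case using step(3) by (meson rtrancl_into_rtrancl)
  qed
  have Cconn: "connected_sub G' C (inner_edges G' C)" unfolding connected_sub_def
  proof (intro ballI)
    fix c1 c2 assume c12: "c1 \<in> C" "c2 \<in> C"
    have "(u0,c1) \<in> ?R\<^sup>*" using c12(1) unfolding C_def by simp
    then have "(u0,c1) \<in> (adj G' C (inner_edges G' C))\<^sup>*" by (rule pathC)
    then have 1: "(c1,u0) \<in> (adj G' C (inner_edges G' C))\<^sup>*" by (rule adj_rtrancl_sym)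
    have "(u0,c2) \<in> ?R\<^sup>*" using c12(2) unfolding C_def by simp
    then have 2: "(u0,c2) \<in> (adj G' C (inner_edges G' C))\<^sup>*" by (rule pathC)
    show "(c1,c2) \<in> (adj G' C (inner_edges G' C))\<^sup>*" using 1 2 by (rule rtrancl_trans)
  qed
  have Csat: "\<forall>u\<in>C. \<forall>u'\<in>verts G'. f u' = f u \<longrightarrow> u' \<in> C"
  proof (intro ballI impI)
    fix u u' assume u: "u \<in> C" and u': "u' \<in> verts G'" and fu: "f u' = f u"
    have uY: "u \<in> Y" using u CY by blast
    have uM: "u \<in> M" using uY YM by blast
    have uV: "u \<in> verts G'" using uM MV by blast
    have fuw: "f u \<noteq> w"
    proof
      assume "f u = w" then have "u \<in> fiber G' f w" using uV fiber_iff by simp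
      then show False using uY uM unfolding Y_def X_def by blast
    qed
    have Fsub: "fiber G' f (f u) \<subseteq> Y"
    proof
      fix z assume z: "z \<in> fiber G' f (f u)"
      then have zV: "z \<in> verts G'" and fz: "f z = f u" using fiber_iff by auto
      have "z \<in> M" using sat_other[OF uM fuw] zV fz by blast
      moreover have "z \<notin> fiber G' f w" using nfw fz fuw by simp
      ultimately show "z \<in> Y" unfolding Y_def X_def by blast
    qed
    have x: "f u \<in> verts G" using f_in[OF uV] .
    have uF: "u \<in> fiber G' f (f u)" using uV fiber_iff by simp
    have u'F: "u' \<in> fiber G' f (f u)" using u' fu fiber_iff by simp
    have "(u,u') \<in> (adj G' (fiber G' f (f u)) {e\<in>S. ends G' e \<subseteq> fiber G' f (f u)})\<^sup>*"
      using c_fconn[OF x] uF u'F unfolding connected_sub_def by blast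
    moreover have "{e\<in>S. ends G' e \<subseteq> fiber G' f (f u)} \<subseteq> inner_edges G' Y"
      using c_S Fsub unfolding inner_edges_def by blast
    ultimately have "(u,u') \<in> ?R\<^sup>*" using adj_rtrancl_mono[OF Fsub] by blast
    moreover have "(u0,u) \<in> ?R\<^sup>*" using u unfolding C_def by blast
    ultimately have "(u0,u') \<in> ?R\<^sup>*" by (rule rtrancl_trans[rotated])
    moreover have "u' \<in> Y" using Fsub u'F by blast
    ultimately show "u' \<in> C" unfolding C_def by blast
  qed
  define Q where "Q = {e\<in>edges G'. ends G' e \<inter> C \<noteq> {} \<and> ends G' e \<inter> X \<noteq> {}}"
  have cutC: "cutE G' C = Q"
  proof (rule equalityI; rule subsetI)
    fix e assume e: "e \<in> cutE G' C"
    then have eE: "e \<in> edges G'" and m: "ends G' e \<inter> C \<noteq> {}" and ns: "\<not> ends G' e \<subseteq> C"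
      unfolding cutE_def by auto
    obtain p where p: "p \<in> ends G' e" "p \<in> C" using m by blast
    obtain q where q: "q \<in> ends G' e" "q \<notin> C" using ns by blast
    have pq: "p \<noteq> q" using p q by blast
    have epq: "ends G' e = {p,q}" using two_ends[OF st' eE p(1) q(1) pq] .
    have qV: "q \<in> verts G'" using st_endsV[OF st' eE] q by blast
    have qM: "q \<in> M"
    proof (rule ccontr)
      assume "q \<notin> M"
      moreover have "ends G' e \<inter> M \<noteq> {}" using p CM by blast
      moreover have "\<not> ends G' e \<subseteq> M" using q \<open>q \<notin> M\<close> by blast
      ultimately have "e = e0" using cut_unique[OF c(1) eE] by blast
      then have "p \<in> {a,b}" using p c(3) by simp
      moreover have "a \<notin> C" using aX CX by blast
      moreover have "b \<notin> C" using c(6) CM by blast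
      ultimately show False using p(2) by blast
    qed
    have qX: "q \<in> X"
    proof (rule ccontr)
      assume "q \<notin> X"
      then have qY: "q \<in> Y" using qM unfolding Y_def by blast
      have pY: "p \<in> Y" using p CY by blast
      have "e \<in> inner_edges G' Y" using eE epq pY qY unfolding inner_edges_def by auto
      then have "(p,q) \<in> ?R" unfolding adj_iff using epq pY qY by blast
      moreover have "(u0,p) \<in> ?R\<^sup>*" using p unfolding C_def by blast
      ultimately have "(u0,q) \<in> ?R\<^sup>*" by (rule rtrancl_into_rtrancl[rotated]) 
      then have "q \<in> C" using qY unfolding C_def by blast
      then show False using q by blast
    qed
    show "e \<in> Q" unfolding Q_def using eE p qX q by blast
  next
    fix e assume "e \<in> Q"
    then show "e \<in> cutE G' C" unfolding Q_def cutE_def using CX by blast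
  qed
  have fQ: "finite Q" unfolding Q_def using st_finE[OF st'] by simp
  have Qne: "Q \<noteq> {}"
  proof -
    have aC: "a \<notin> C" using aX CX by blast
    obtain e p q where e: "e \<in> inner_edges G' M" "ends G' e = {p,q}" "p \<in> M" "p \<in> C" "q \<in> M" "q \<notin> C"
      using cross_conn[OF tail_conn[OF M(1)] _ u0C c(4) aC] u0C CM by blast
    have eE: "e \<in> edges G'" using e(1) unfolding inner_edges_def by simp
    have "e \<in> cutE G' C" unfolding cutE_def using eE e by auto
    then show ?thesis using cutC by blast
  qed
  have Xconn: "connected_sub G' X (inner_edges G' X)"
  proof -
    have "connected_sub G' X {e\<in>{e\<in>S. ends G' e \<subseteq> fiber G' f w}. ends G' e \<subseteq> X}"
    proof (rule conn_part[OF c_fconn[OF wV]])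
      show "X \<subseteq> fiber G' f w" unfolding X_def by blast
      show "a \<in> X" using aX .
      show "\<forall>e\<in>{e\<in>S. ends G' e \<subseteq> fiber G' f w}. \<forall>p q. ends G' e = {p, q} \<and> p \<in> X \<and> q \<in> fiber G' f w - X \<longrightarrow> p = a"
      proof (intro ballI allI impI)
        fix e p q assume e: "e \<in> {e\<in>S. ends G' e \<subseteq> fiber G' f w}" and h: "ends G' e = {p, q} \<and> p \<in> X \<and> q \<in> fiber G' f w - X"
        have eE: "e \<in> edges G'" using e c_S by blast
        have pM: "p \<in> M" using h XM by blast
        have qM: "q \<notin> M" using h unfolding X_def by blast
        have "e = e0" using cut_unique[OF c(1) eE] h pM qM by blast
        then have "{p,q} = {a,b}" using h c(3) by simp
        then show "p = a" using pM c(6) by (metis doubleton_eq_iff)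
      qed
    qed
    moreover have "{e\<in>{e\<in>S. ends G' e \<subseteq> fiber G' f w}. ends G' e \<subseteq> X} \<subseteq> inner_edges G' X"
      using c_S unfolding inner_edges_def by blast
    ultimately show ?thesis by (rule connected_mono)
  qed
  have Cne: "C \<noteq> {}" using u0C by blast
  have Xne: "X \<noteq> {}" using aX by blast
  have ends_ne: "\<forall>e\<in>edges G'. ends G' e \<noteq> {}" using st_ends_ne[OF st'] by blast
  have innerCX: "inner_edges G' (C \<union> X) = inner_edges G' C \<union> inner_edges G' X \<union> Q"
  proof (rule equalityI; rule subsetI)
    fix e assume e: "e \<in> inner_edges G' (C \<union> X)"
    then have eE: "e \<in> edges G'" and s: "ends G' e \<subseteq> C \<union> X" unfolding inner_edges_def by auto
    show "e \<in> inner_edges G' C \<union> inner_edges G' X \<union> Q"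
    proof (cases "ends G' e \<subseteq> C")
      case True then show ?thesis using eE unfolding inner_edges_def by blast
    next
      case nC: False
      show ?thesis
      proof (cases "ends G' e \<subseteq> X")
        case True then show ?thesis using eE unfolding inner_edges_def by blast
      next
        case False
        then have "ends G' e \<inter> C \<noteq> {}" "ends G' e \<inter> X \<noteq> {}" using s nC by blast+
        then show ?thesis using eE unfolding Q_def by blast
      qed
    qed
  next
    fix e assume e: "e \<in> inner_edges G' C \<union> inner_edges G' X \<union> Q"
    show "e \<in> inner_edges G' (C \<union> X)"
    proof (cases "e \<in> Q")
      case True
      then have eE: "e \<in> edges G'" and m: "ends G' e \<inter> C \<noteq> {}" "ends G' e \<inter> X \<noteq> {}" unfolding Q_def by auto
      obtain p where p: "p \<in> ends G' e" "p \<in> C" using m by blast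
      obtain q where q: "q \<in> ends G' e" "q \<in> X" using m by blast
      have "p \<noteq> q" using p q CX by blast
      then have "ends G' e = {p,q}" using two_ends[OF st' eE p(1) q(1)] by blast
      then show ?thesis using eE p q unfolding inner_edges_def by auto
    next
      case False
      then show ?thesis using e unfolding inner_edges_def by blast
    qed
  qed
  have d1: "inner_edges G' C \<inter> inner_edges G' X = {}"
    using CX ends_ne unfolding inner_edges_def by blast
  have d2: "inner_edges G' C \<inter> Q = {}"
    using CX unfolding inner_edges_def Q_def by blast
  have d3: "inner_edges G' X \<inter> Q = {}"
    using CX unfolding inner_edges_def Q_def by blast
  have split: "sub_genus G' (C \<union> X) (inner_edges G' (C \<union> X))
      = sub_genus G' C (inner_edges G' C) + sub_genus G' X (inner_edges G' X) + int (card Q) - 1"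
    unfolding innerCX by (rule genus_split) (use fC fX CX finite_inner[OF st'] fQ d1 d2 d3 in auto)
  have innM: "\<forall>e\<in>inner_edges G' M. ends G' e \<subseteq> M" using inner_ends by blast
  have gCX: "sub_genus G' (C \<union> X) (inner_edges G' (C \<union> X)) \<le> 0"
  proof -
    have "sub_genus G' (C \<union> X) {e\<in>inner_edges G' M. ends G' e \<subseteq> C \<union> X} \<le> sub_genus G' M (inner_edges G' M)"
      by (rule genus_mono[OF tail_conn[OF M(1)] fM finite_inner[OF st'] innM]) (use CM XM Cne in auto)
    moreover have "{e\<in>inner_edges G' M. ends G' e \<subseteq> C \<union> X} = inner_edges G' (C \<union> X)"
      using CM XM unfolding inner_edges_def by auto
    ultimately show ?thesis using tail_genus[OF M(1)] by simp
  qed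
  have gC: "sub_genus G' C (inner_edges G' C) \<le> 0"
  proof -
    have "sub_genus G' C {e\<in>inner_edges G' M. ends G' e \<subseteq> C} \<le> sub_genus G' M (inner_edges G' M)"
      by (rule genus_mono[OF tail_conn[OF M(1)] fM finite_inner[OF st'] innM CM Cne])
    moreover have "{e\<in>inner_edges G' M. ends G' e \<subseteq> C} = inner_edges G' C"
      using CM unfolding inner_edges_def by auto
    ultimately show ?thesis using tail_genus[OF M(1)] by simp
  qed
  have gC0: "sub_genus G' C (inner_edges G' C) \<ge> 0"
    by (rule genus_nonneg[OF Cconn fC Cne finite_inner[OF st']]) (use inner_ends in blast)
  have gX0: "sub_genus G' X (inner_edges G' X) \<ge> 0"
    by (rule genus_nonneg[OF Xconn fX Xne finite_inner[OF st']]) (use inner_ends in blast)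
  have "card Q \<le> 1" using split gCX gC0 gX0 by linarith
  moreover have "card Q \<ge> 1" using Qne fQ by (metis One_nat_def Suc_leI card_gt_0_iff)
  ultimately have cQ: "card Q = 1" by simp
  have tC: "rational_tail G' C"
    unfolding rt_iff using CM MV Cne Cconn gC gC0 cQ cutC by auto
  have mC: "marks n G' C \<in> K" using goodK_down[OF gK M(2) marks_mono[OF CM]] .
  show ?thesis by (rule sat_tail[OF v tC mC FvC Csat])
qed

lemma Z2_bwd:
  assumes gK: "goodK g n K" and v: "v \<in> verts G" and Z: "fiber G' f v \<subseteq> Z_of g n K G'"
  shows "v \<in> Z_of g n K G"
proof -
  obtain M where M: "maxK n K G' M" "fiber G' f v \<subseteq> M" using fiber_in_max[OF gK v Z] by blast
  have tM: "rational_tail G' M" "marks n G' M \<in> K" using M(1) unfolding maxK_def Kt_def by auto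
  obtain e0 a b where c: "cutE G' M = {e0}" "e0 \<in> edges G'" "ends G' e0 = {a,b}" "a \<in> M" "b \<in> verts G'" "b \<notin> M"
    using tail_cut[OF st' tM(1)] by blast
  show ?thesis
  proof (cases "e0 \<in> S")
    case True
    show ?thesis by (rule case_S[OF gK v tM M(2) c True])
  next
    case False
    show ?thesis by (rule case_nS[OF v tM M(2) c(1) False])
  qed
qed

lemma Z2:
  assumes gK: "goodK g n K" and v: "v \<in> verts G"
  shows "v \<in> Z_of g n K G \<longleftrightarrow> fiber G' f v \<subseteq> Z_of g n K G'"
  using Z2_fwd[OF v] Z2_bwd[OF gK v] by blast

end


lemma Zof_extremal:
  assumes gK: "goodK g n K"
  shows "extremal_assignment g n (Z_of g n K)"
  unfolding extremal_assignment_def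
proof (intro conjI allI impI)
  fix G assume "\<not> stable_graph g n G"
  then show "Z_of g n K G = {}" unfolding Z_of_def by simp
next
  fix G assume st: "stable_graph g n G"
  show "Z_of g n K G \<subseteq> verts G" using Zof_stable[OF st] tail_sub unfolding Kt_def by blast
next
  fix G assume st: "stable_graph g n G"
  show "Z_of g n K G \<noteq> verts G" using Zof_ne[OF st gK] .
next
  fix G' G S f h
  assume a: "stable_graph g n G' \<and> stable_graph g n G \<and> contraction n G' G S f h"
  then interpret contr g n G' G S f h by (intro contr.intro) auto
  show "\<forall>v\<in>verts G. (v \<in> Z_of g n K G) = (fiber G' f v \<subseteq> Z_of g n K G')"
    using Z2[OF gK] by blast
qed

definition GA :: "nat \<Rightarrow> nat set \<Rightarrow> sgraph" where
  "GA g A = \<lparr>verts = {0,1}, edges = {0}, ends = (\<lambda>e. {0,1}), gen = (\<lambda>v. if v = 0 then 0 else g),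
     leg = (\<lambda>i. if i \<in> A then 0 else 1)\<rparr>"

lemma GA_simps: "verts (GA g A) = {0,1}" "edges (GA g A) = {0}" "ends (GA g A) e = {0,1}"
  "gen (GA g A) v = (if v = 0 then 0 else g)" "leg (GA g A) i = (if i \<in> A then 0 else 1)"
  unfolding GA_def by simp_all

lemma conn_single: "connected_sub G {x} F"
  unfolding connected_sub_def by simp

lemma conn_pair:
  assumes "e \<in> F" "ends G e = {x,y}"
  shows "connected_sub G {x,y} F"
proof -
  have xy: "(x,y) \<in> adj G {x,y} F" unfolding adj_iff using assms by blast
  then have yx: "(y,x) \<in> adj G {x,y} F" by (rule adj_sym)
  show ?thesis unfolding connected_sub_def using xy yx by blast
qed

lemma conn_three:
  assumes "e \<in> F" "ends G e = {x,y}" "e' \<in> F" "ends G e' = {y,z}"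
  shows "connected_sub G {x,y,z} F"
proof -
  have xy: "(x,y) \<in> adj G {x,y,z} F" unfolding adj_iff using assms by blast
  have yz: "(y,z) \<in> adj G {x,y,z} F" unfolding adj_iff using assms by blast
  have yx: "(y,x) \<in> adj G {x,y,z} F" using adj_sym[OF xy] .
  have zy: "(z,y) \<in> adj G {x,y,z} F" using adj_sym[OF yz] .
  have "(x,z) \<in> (adj G {x,y,z} F)\<^sup>*" using xy yz by (meson r_into_rtrancl rtrancl_into_rtrancl)
  moreover have "(z,x) \<in> (adj G {x,y,z} F)\<^sup>*" using zy yx by (meson r_into_rtrancl rtrancl_into_rtrancl)
  ultimately show ?thesis unfolding connected_sub_def using xy yz yx zy by blast
qed

lemma marks_GA0: "A \<subseteq> {1..n} \<Longrightarrow> {i\<in>{1..n}. leg (GA g A) i = 0} = A"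
  unfolding GA_simps by auto

lemma marks_GA1: "{i\<in>{1..n}. leg (GA g A) i = 1} = {1..n} - A"
  unfolding GA_simps by auto

lemma val_GA0: "A \<subseteq> {1..n} \<Longrightarrow> valence n (GA g A) 0 = 1 + card A"
  unfolding valence_def using marks_GA0[of A n g] by (simp add: GA_simps)

lemma val_GA1: "valence n (GA g A) 1 = 1 + card ({1..n} - A)"
  unfolding valence_def using marks_GA1[of n g A] by (simp add: GA_simps)

lemma GA_stable:
  assumes A: "A \<subseteq> {1..n}" and cA: "card A \<ge> 2" and c: "g \<ge> 1 \<or> card ({1..n} - A) \<ge> 2"
  shows "stable_graph g n (GA g A)"
  unfolding stable_graph_def
proof (intro conjI)
  show "connected_sub (GA g A) (verts (GA g A)) (edges (GA g A))"
    unfolding GA_simps by (rule conn_pair[of 0]) (auto simp: GA_simps)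
  show "sub_genus (GA g A) (verts (GA g A)) (edges (GA g A)) = int g"
    unfolding sub_genus_def by (simp add: GA_simps)
  show "\<forall>v\<in>verts (GA g A). 0 < 2 * int (gen (GA g A) v) - 2 + int (valence n (GA g A) v)"
    using val_GA0[OF A, of g] val_GA1[of n g A] cA c by (auto simp: GA_simps)
qed (auto simp: GA_simps)

lemma GA_stable_D:
  assumes st: "stable_graph g n (GA g A)" and A: "A \<subseteq> {1..n}"
  shows "card A \<ge> 2" "g \<ge> 1 \<or> card ({1..n} - A) \<ge> 2"
proof -
  have "0 < 2 * int (gen (GA g A) 0) - 2 + int (valence n (GA g A) 0)" using st_stab[OF st, of 0] by (simp add: GA_simps)
  then show "card A \<ge> 2" using val_GA0[OF A, of g] by (simp add: GA_simps)
  have "0 < 2 * int (gen (GA g A) 1) - 2 + int (valence n (GA g A) 1)" using st_stab[OF st, of 1] by (simp add: GA_simps)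
  then show "g \<ge> 1 \<or> card ({1..n} - A) \<ge> 2" using val_GA1[of n g A] by (simp add: GA_simps) presburger
qed

lemma GA_tail0: "rational_tail (GA g A) {0}"
  unfolding rt_iff
proof (intro conjI)
  show "connected_sub (GA g A) {0} (inner_edges (GA g A) {0})" by (rule conn_single)
  have "inner_edges (GA g A) {0} = {}" unfolding inner_edges_def by (simp add: GA_simps)
  then show "sub_genus (GA g A) {0} (inner_edges (GA g A) {0}) = 0" unfolding sub_genus_def by (simp add: GA_simps)
  have "cutE (GA g A) {0} = {0}" unfolding cutE_def by (auto simp: GA_simps)
  then show "card (cutE (GA g A) {0}) = 1" by simp
qed (auto simp: GA_simps)

lemma GA_marks0: "A \<subseteq> {1..n} \<Longrightarrow> marks n (GA g A) {0} = A"
  unfolding marks_def GA_simps by auto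

lemma GA_Zof:
  assumes st: "stable_graph g n (GA g A)" and A: "A \<subseteq> {1..n}"
  shows "0 \<in> Z_of g n K (GA g A) \<longleftrightarrow> A \<in> K"
proof
  assume "A \<in> K"
  then have "{0} \<in> Kt n K (GA g A)" unfolding Kt_def using GA_tail0 GA_marks0[OF A] by simp
  then show "0 \<in> Z_of g n K (GA g A)" using Zof_stable[OF st] by blast
next
  assume "0 \<in> Z_of g n K (GA g A)"
  then obtain T where T: "rational_tail (GA g A) T" "marks n (GA g A) T \<in> K" "0 \<in> T"
    using Zof_stable[OF st] unfolding Kt_def by blast
  have TV: "T \<subseteq> {0,1}" using tail_sub[OF T(1)] by (simp add: GA_simps)
  have "T \<noteq> {0,1}"
  proof
    assume "T = {0,1}"
    then have "cutE (GA g A) T = {}" unfolding cutE_def by (simp add: GA_simps)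
    then show False using T(1) rt_iff by (metis card.empty zero_neq_one)
  qed
  then have "T = {0}" using TV T(3) by blast
  then show "A \<in> K" using T(2) GA_marks0[OF A] by simp
qed


lemma ext_empty: "extremal_assignment g n Z \<Longrightarrow> \<not> stable_graph g n G \<Longrightarrow> Z G = {}"
  unfolding extremal_assignment_def by blast
lemma ext_sub: "extremal_assignment g n Z \<Longrightarrow> stable_graph g n G \<Longrightarrow> Z G \<subseteq> verts G"
  unfolding extremal_assignment_def by blast
lemma ext_ne: "extremal_assignment g n Z \<Longrightarrow> stable_graph g n G \<Longrightarrow> Z G \<noteq> verts G"
  unfolding extremal_assignment_def by blast
lemma ext_Z2: "extremal_assignment g n Z \<Longrightarrow> stable_graph g n G' \<Longrightarrow> stable_graph g n G \<Longrightarrow>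
   contraction n G' G S f h \<Longrightarrow> v \<in> verts G \<Longrightarrow> (v \<in> Z G \<longleftrightarrow> fiber G' f v \<subseteq> Z G')"
  unfolding extremal_assignment_def by blast
lemma ext_st: "extremal_assignment g n Z \<Longrightarrow> x \<in> Z G \<Longrightarrow> stable_graph g n G"
  using ext_empty by blast

lemma const_image: "X \<noteq> {} \<Longrightarrow> \<forall>u\<in>X. g u = c \<Longrightarrow> g ` X = {c}"
  by auto

lemma contr_GA:
  assumes st: "stable_graph g n G" and t: "rational_tail G T"
    and c: "cutE G T = {e0}" "e0 \<in> edges G" "ends G e0 = {a,b}" "a \<in> T" "b \<in> verts G" "b \<notin> T"
  shows "contraction n G (GA g (marks n G T)) (edges G - {e0}) (\<lambda>u. if u \<in> T then 0 else 1) (\<lambda>_. 0)"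
    "fiber G (\<lambda>u. if u \<in> T then 0 else 1) 0 = T"
proof -
  let ?f = "\<lambda>u::nat. if u \<in> T then 0 else (1::nat)"
  have TV: "T \<subseteq> verts G" using tail_sub[OF t] .
  have aV: "a \<in> verts G" using c(4) TV by blast
  have F0: "fiber G ?f 0 = T" unfolding fiber_def using TV by auto
  have F1: "fiber G ?f 1 = verts G - T" unfolding fiber_def by auto
  show "fiber G ?f 0 = T" using F0 .
  have E1: "edges G - (edges G - {e0}) = {e0}" using c(2) by blast
  have I0: "{e\<in>edges G - {e0}. ends G e \<subseteq> T} = inner_edges G T"
    unfolding inner_edges_def using c(3) c(6) by auto
  have I1: "{e\<in>edges G - {e0}. ends G e \<subseteq> verts G - T} = inner_edges G (verts G - T)"
    unfolding inner_edges_def using c(3) c(4) by auto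
  show "contraction n G (GA g (marks n G T)) (edges G - {e0}) ?f (\<lambda>_. 0)"
    unfolding contraction_def
  proof (intro conjI ballI)
    show "edges G - {e0} \<subseteq> edges G" by blast
    show "?f ` verts G = verts (GA g (marks n G T))"
    proof (rule equalityI)
      show "?f ` verts G \<subseteq> verts (GA g (marks n G T))" by (auto simp: GA_simps)
      have fa: "?f a = 0" using c(4) by simp
      have fb: "?f b = 1" using c(6) by simp
      have "?f a \<in> ?f ` verts G" using aV by (rule imageI)
      then have 0: "0 \<in> ?f ` verts G" using fa by simp
      have "?f b \<in> ?f ` verts G" using c(5) by (rule imageI)
      then have 1: "1 \<in> ?f ` verts G" using fb by simp
      show "verts (GA g (marks n G T)) \<subseteq> ?f ` verts G" unfolding GA_simps using 0 1 by blast
    qed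
    show "bij_betw (\<lambda>_. 0) (edges G - (edges G - {e0})) (edges (GA g (marks n G T)))"
      unfolding E1 GA_simps by (simp add: bij_betw_def)
  next
    fix e assume "e \<in> edges G - (edges G - {e0})"
    then have "e = e0" by blast
    have "?f ` ends G e0 = {?f a, ?f b}" using c(3) by simp
    also have "\<dots> = {0,1}" using c(4) c(6) by simp
    finally show "ends (GA g (marks n G T)) 0 = ?f ` ends G e" using \<open>e = e0\<close> by (simp add: GA_simps)
  next
    fix e assume e: "e \<in> edges G - {e0}"
    then have eE: "e \<in> edges G" and ne: "e \<noteq> e0" by auto
    have nE: "ends G e \<noteq> {}" using st_ends_ne[OF st eE] .
    have "ends G e \<subseteq> T \<or> ends G e \<inter> T = {}" using cut_unique[OF c(1) eE] ne by blast
    then have "(\<forall>u\<in>ends G e. ?f u = 0) \<or> (\<forall>u\<in>ends G e. ?f u = 1)"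
    proof (elim disjE)
      assume "ends G e \<subseteq> T" then show ?thesis by (intro disjI1 ballI) (simp add: subsetD)
    next
      assume "ends G e \<inter> T = {}" then show ?thesis by (intro disjI2 ballI) (simp add: disjoint_iff)
    qed
    then have "?f ` ends G e = {0} \<or> ?f ` ends G e = {1}"
    proof (elim disjE)
      assume "\<forall>u\<in>ends G e. ?f u = 0" then show ?thesis by (intro disjI1 const_image[OF nE])
    next
      assume "\<forall>u\<in>ends G e. ?f u = 1" then show ?thesis by (intro disjI2 const_image[OF nE])
    qed
    then show "card (?f ` ends G e) = 1" by (elim disjE) simp_all
  next
    fix i assume i: "i \<in> {1..n}"
    have "(i \<in> marks n G T) = (leg G i \<in> T)" using i unfolding marks_def by simp
    then show "leg (GA g (marks n G T)) i = ?f (leg G i)" unfolding GA_simps by simp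
  next
    fix v assume v: "v \<in> verts (GA g (marks n G T))"
    then have "v = 0 \<or> v = 1" by (simp add: GA_simps)
    then show "connected_sub G (fiber G ?f v) {e\<in>edges G - {e0}. ends G e \<subseteq> fiber G ?f v}"
    proof
      assume "v = 0"
      then show ?thesis by (simp only: F0 I0 tail_conn[OF t])
    next
      assume "v = 1"
      then show ?thesis by (simp only: F1 I1 compl_conn[OF st t])
    qed
  next
    fix v assume v: "v \<in> verts (GA g (marks n G T))"
    then have "v = 0 \<or> v = 1" by (simp add: GA_simps)
    then show "int (gen (GA g (marks n G T)) v) = sub_genus G (fiber G ?f v) {e\<in>edges G - {e0}. ends G e \<subseteq> fiber G ?f v}"
    proof
      assume v0: "v = 0"
      have "sub_genus G (fiber G ?f v) {e\<in>edges G - {e0}. ends G e \<subseteq> fiber G ?f v} = 0"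
        by (simp only: v0 F0 I0 tail_genus[OF t])
      then show ?thesis using v0 by (simp add: GA_simps)
    next
      assume v1: "v = 1"
      have "sub_genus G (fiber G ?f v) {e\<in>edges G - {e0}. ends G e \<subseteq> fiber G ?f v} = int g"
        by (simp only: v1 F1 I1 compl_tail_genus[OF st t])
      then show ?thesis using v1 by (simp add: GA_simps)
    qed
  qed
qed

lemma tail_GA_stable:
  assumes st: "stable_graph g n G" and t: "rational_tail G T"
  shows "stable_graph g n (GA g (marks n G T))"
proof (rule GA_stable[OF marks_sub tail_marks[OF st t]])
  show "1 \<le> g \<or> 2 \<le> card ({1..n} - marks n G T)"
  proof (cases "g = 0")
    case True
    then have "rational_tail G (verts G - T)" using compl_tail0 st t by simp
    then have "card (marks n G (verts G - T)) \<ge> 2" using tail_marks[OF st] by blast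
    then show ?thesis using marks_compl[OF st] by simp
  qed simp
qed

lemma tailZ:
  assumes Z: "extremal_assignment g n Z" and st: "stable_graph g n G" and t: "rational_tail G T"
  shows "T \<subseteq> Z G \<longleftrightarrow> 0 \<in> Z (GA g (marks n G T))"
proof -
  obtain e0 a b where c: "cutE G T = {e0}" "e0 \<in> edges G" "ends G e0 = {a,b}" "a \<in> T" "b \<in> verts G" "b \<notin> T"
    using tail_cut[OF st t] by blast
  have sA: "stable_graph g n (GA g (marks n G T))" using tail_GA_stable[OF st t] .
  show ?thesis using ext_Z2[OF Z st sA contr_GA(1)[OF st t c], of 0] contr_GA(2)[OF st t c]
    by (simp add: GA_simps)
qed

definition Kz :: "nat \<Rightarrow> nat \<Rightarrow> (sgraph \<Rightarrow> nat set) \<Rightarrow> nat set set" where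
  "Kz g n Z = {A. A \<subseteq> {1..n} \<and> (card A \<le> 1 \<or> 0 \<in> Z (GA g A))}"

lemma tailKz:
  assumes Z: "extremal_assignment g n Z" and st: "stable_graph g n G" and t: "rational_tail G T"
  shows "T \<subseteq> Z G \<longleftrightarrow> marks n G T \<in> Kz g n Z"
proof -
  have "\<not> card (marks n G T) \<le> 1" using tail_marks[OF st t] by simp
  then have "marks n G T \<in> Kz g n Z \<longleftrightarrow> 0 \<in> Z (GA g (marks n G T))"
    using marks_sub[of n G T] unfolding Kz_def by simp
  then show ?thesis using tailZ[OF Z st t] by simp
qed

lemma Z_eq:
  assumes Z: "extremal_assignment g n Z" and S: "supported_on_rational_tails g n Z"
  shows "Z_of g n (Kz g n Z) = Z"
proof
  fix G
  show "Z_of g n (Kz g n Z) G = Z G"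
  proof (cases "stable_graph g n G")
    case False
    then show ?thesis using ext_empty[OF Z False] unfolding Z_of_def by simp
  next
    case st: True
    have "\<exists>\<T>. (\<forall>T\<in>\<T>. rational_tail G T) \<and>
             (\<forall>T1\<in>\<T>. \<forall>T2\<in>\<T>. T1 \<noteq> T2 \<longrightarrow>
                 T1 \<inter> T2 = {} \<and> (\<forall>e\<in>edges G. \<not> (ends G e \<inter> T1 \<noteq> {} \<and> ends G e \<inter> T2 \<noteq> {}))) \<and>
             \<Union>\<T> = Z G"
      using S[unfolded supported_on_rational_tails_def, rule_format, OF st] .
    then obtain \<T> where T: "\<forall>T\<in>\<T>. rational_tail G T" "\<Union>\<T> = Z G"
      by (elim exE conjE) (rule that)
    have "\<Union>(Kt n (Kz g n Z) G) = Z G"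
    proof (rule equalityI; rule subsetI)
      fix x assume "x \<in> \<Union>(Kt n (Kz g n Z) G)"
      then obtain T0 where T0: "T0 \<in> Kt n (Kz g n Z) G" "x \<in> T0" by blast
      then have t0: "rational_tail G T0" and m0: "marks n G T0 \<in> Kz g n Z" unfolding Kt_def by auto
      have "T0 \<subseteq> Z G" using tailKz[OF Z st t0] m0 by simp
      then show "x \<in> Z G" using T0(2) by blast
    next
      fix x assume "x \<in> Z G"
      then obtain T0 where T0: "T0 \<in> \<T>" "x \<in> T0" using T(2) by blast
      have t0: "rational_tail G T0" using T(1) T0(1) by blast
      have "T0 \<subseteq> Z G" using T(2) T0(1) by blast
      then have "marks n G T0 \<in> Kz g n Z" using tailKz[OF Z st t0] by simp
      then show "x \<in> \<Union>(Kt n (Kz g n Z) G)" using t0 T0(2) unfolding Kt_def by blast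
    qed
    then show ?thesis using Zof_stable[OF st] by simp
  qed
qed


definition GH :: "nat \<Rightarrow> nat set \<Rightarrow> nat set \<Rightarrow> sgraph" where
  "GH g A B = \<lparr>verts = {0,1,2}, edges = {0,1}, ends = (\<lambda>e. if e = 0 then {0,1} else {1,2}),
     gen = (\<lambda>v. if v = 2 then g else 0), leg = (\<lambda>i. if i \<in> B then 0 else if i \<in> A then 1 else 2)\<rparr>"

lemma GH_simps: "verts (GH g A B) = {0,1,2}" "edges (GH g A B) = {0,1}"
  "ends (GH g A B) e = (if e = 0 then {0,1} else {1,2})"
  "gen (GH g A B) v = (if v = 2 then g else 0)" "leg (GH g A B) i = (if i \<in> B then 0 else if i \<in> A then 1 else 2)"
  unfolding GH_def by simp_all

lemma GH_legs:
  assumes "B \<subseteq> A" "A \<subseteq> {1..n}"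
  shows "{i\<in>{1..n}. leg (GH g A B) i = 0} = B" "{i\<in>{1..n}. leg (GH g A B) i = 1} = A - B"
    "{i\<in>{1..n}. leg (GH g A B) i = 2} = {1..n} - A"
  using assms unfolding GH_simps by auto

lemma GH_val:
  assumes "B \<subseteq> A" "A \<subseteq> {1..n}"
  shows "valence n (GH g A B) 0 = 1 + card B" "valence n (GH g A B) 1 = 2 + card (A - B)"
    "valence n (GH g A B) 2 = 1 + card ({1..n} - A)"
  unfolding valence_def GH_legs[OF assms] by (simp_all add: GH_simps)

lemma GH_stable:
  assumes BA: "B \<subseteq> A" and A: "A \<subseteq> {1..n}" and cB: "card B \<ge> 2" and AB: "A - B \<noteq> {}"
    and c: "g \<ge> 1 \<or> card ({1..n} - A) \<ge> 2"
  shows "stable_graph g n (GH g A B)"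
  unfolding stable_graph_def
proof (intro conjI)
  show "connected_sub (GH g A B) (verts (GH g A B)) (edges (GH g A B))"
    unfolding GH_simps(1,2) by (rule conn_three[where e=0 and x=0 and y=1 and e'=1 and z=2]) (simp_all add: GH_simps)
  show "sub_genus (GH g A B) (verts (GH g A B)) (edges (GH g A B)) = int g"
    unfolding sub_genus_def by (simp add: GH_simps)
  have fAB: "finite (A - B)" using A finite_subset by blast
  then have "card (A - B) > 0" using AB by (simp add: card_gt_0_iff)
  then show "\<forall>v\<in>verts (GH g A B). 0 < 2 * int (gen (GH g A B) v) - 2 + int (valence n (GH g A B) v)"
    using GH_val[OF BA A, of g] cB c by (auto simp: GH_simps)
qed (auto simp: GH_simps)

lemma GH_to_A:
  assumes BA: "B \<subseteq> A"
  shows "contraction n (GH g A B) (GA g A) {0} (\<lambda>u. if u = 2 then 1 else 0) (\<lambda>_. 0)"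
    "fiber (GH g A B) (\<lambda>u. if u = 2 then 1 else 0) 0 = {0,1}"
proof -
  let ?f = "\<lambda>u::nat. if u = 2 then 1 else (0::nat)"
  have F0: "fiber (GH g A B) ?f 0 = {0,1}" unfolding fiber_def GH_simps by auto
  have F1: "fiber (GH g A B) ?f 1 = {2}" unfolding fiber_def GH_simps by auto
  show "fiber (GH g A B) ?f 0 = {0,1}" using F0 .
  have S0: "{e\<in>{0::nat}. ends (GH g A B) e \<subseteq> {0,1}} = {0}" by (simp add: GH_simps)
  have S1: "{e\<in>{0::nat}. ends (GH g A B) e \<subseteq> {2}} = {}" by (simp add: GH_simps)
  show "contraction n (GH g A B) (GA g A) {0} ?f (\<lambda>_. 0)"
    unfolding contraction_def
  proof (intro conjI ballI)
    show "{0} \<subseteq> edges (GH g A B)" by (simp add: GH_simps)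
    show "?f ` verts (GH g A B) = verts (GA g A)" unfolding GH_simps GA_simps by auto
    show "bij_betw (\<lambda>_. 0) (edges (GH g A B) - {0}) (edges (GA g A))"
      unfolding GH_simps GA_simps by (simp add: bij_betw_def)
  next
    fix e assume "e \<in> edges (GH g A B) - {0}"
    then have "e = 1" by (auto simp: GH_simps)
    then show "ends (GA g A) 0 = ?f ` ends (GH g A B) e" by (auto simp: GH_simps GA_simps)
  next
    fix e assume "e \<in> {0::nat}"
    then show "card (?f ` ends (GH g A B) e) = 1" by (simp add: GH_simps)
  next
    fix i assume "i \<in> {1..n}"
    show "leg (GA g A) i = ?f (leg (GH g A B) i)" using BA unfolding GA_simps GH_simps by auto
  next
    fix v assume "v \<in> verts (GA g A)"
    then have "v = 0 \<or> v = 1" by (simp add: GA_simps)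
    then show "connected_sub (GH g A B) (fiber (GH g A B) ?f v) {e\<in>{0}. ends (GH g A B) e \<subseteq> fiber (GH g A B) ?f v}"
    proof
      assume "v = 0"
      then show ?thesis unfolding \<open>v = 0\<close> F0 S0 by (rule_tac conn_pair[of 0]) (simp_all add: GH_simps)
    next
      assume "v = 1"
      then show ?thesis unfolding \<open>v = 1\<close> F1 S1 by (simp add: conn_single)
    qed
  next
    fix v assume "v \<in> verts (GA g A)"
    then have "v = 0 \<or> v = 1" by (simp add: GA_simps)
    then show "int (gen (GA g A) v) = sub_genus (GH g A B) (fiber (GH g A B) ?f v) {e\<in>{0}. ends (GH g A B) e \<subseteq> fiber (GH g A B) ?f v}"
    proof
      assume "v = 0"
      then show ?thesis unfolding \<open>v = 0\<close> F0 S0 sub_genus_def by (simp add: GH_simps GA_simps)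
    next
      assume "v = 1"
      then show ?thesis unfolding \<open>v = 1\<close> F1 S1 sub_genus_def by (simp add: GH_simps GA_simps)
    qed
  qed
qed

lemma GH_to_B:
  shows "contraction n (GH g A B) (GA g B) {1} (\<lambda>u. if u = 0 then 0 else 1) (\<lambda>_. 0)"
    "fiber (GH g A B) (\<lambda>u. if u = 0 then 0 else 1) 0 = {0}"
proof -
  let ?f = "\<lambda>u::nat. if u = 0 then 0 else (1::nat)"
  have F0: "fiber (GH g A B) ?f 0 = {0}" unfolding fiber_def GH_simps by auto
  have F1: "fiber (GH g A B) ?f 1 = {1,2}" unfolding fiber_def GH_simps by auto
  show "fiber (GH g A B) ?f 0 = {0}" using F0 .
  have S0: "{e\<in>{1::nat}. ends (GH g A B) e \<subseteq> {0}} = {}" by (simp add: GH_simps)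
  have S1: "{e\<in>{1::nat}. ends (GH g A B) e \<subseteq> {1,2}} = {1}" by (auto simp: GH_simps)
  show "contraction n (GH g A B) (GA g B) {1} ?f (\<lambda>_. 0)"
    unfolding contraction_def
  proof (intro conjI ballI)
    show "{1} \<subseteq> edges (GH g A B)" by (simp add: GH_simps)
    show "?f ` verts (GH g A B) = verts (GA g B)" unfolding GH_simps GA_simps by auto
    have "{0,1} - {1::nat} = {0}" by auto
    then show "bij_betw (\<lambda>_. 0) (edges (GH g A B) - {1}) (edges (GA g B))"
      unfolding GH_simps GA_simps by (simp add: bij_betw_def)
  next
    fix e assume "e \<in> edges (GH g A B) - {1}"
    then have "e = 0" by (auto simp: GH_simps)
    then show "ends (GA g B) 0 = ?f ` ends (GH g A B) e" by (auto simp: GH_simps GA_simps)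
  next
    fix e assume "e \<in> {1::nat}"
    then show "card (?f ` ends (GH g A B) e) = 1" by (simp add: GH_simps)
  next
    fix i assume "i \<in> {1..n}"
    show "leg (GA g B) i = ?f (leg (GH g A B) i)" unfolding GA_simps GH_simps by auto
  next
    fix v assume "v \<in> verts (GA g B)"
    then have "v = 0 \<or> v = 1" by (simp add: GA_simps)
    then show "connected_sub (GH g A B) (fiber (GH g A B) ?f v) {e\<in>{1}. ends (GH g A B) e \<subseteq> fiber (GH g A B) ?f v}"
    proof
      assume "v = 0"
      then show ?thesis unfolding \<open>v = 0\<close> F0 S0 by (simp add: conn_single)
    next
      assume "v = 1"
      then show ?thesis unfolding \<open>v = 1\<close> F1 S1 by (rule_tac conn_pair[of 1]) (simp_all add: GH_simps)
    qed
  next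
    fix v assume "v \<in> verts (GA g B)"
    then have "v = 0 \<or> v = 1" by (simp add: GA_simps)
    then show "int (gen (GA g B) v) = sub_genus (GH g A B) (fiber (GH g A B) ?f v) {e\<in>{1}. ends (GH g A B) e \<subseteq> fiber (GH g A B) ?f v}"
    proof
      assume "v = 0"
      then show ?thesis unfolding \<open>v = 0\<close> F0 S0 sub_genus_def by (simp add: GH_simps GA_simps)
    next
      assume "v = 1"
      then show ?thesis unfolding \<open>v = 1\<close> F1 S1 sub_genus_def by (simp add: GH_simps GA_simps)
    qed
  qed
qed


lemma GA_swap:
  assumes A: "A \<subseteq> {1..n}"
  shows "contraction n (GA 0 A) (GA 0 ({1..n} - A)) {} (\<lambda>u. if u = 0 then 1 else 0) id"
    "fiber (GA 0 A) (\<lambda>u. if u = 0 then 1 else 0) 0 = {1}"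
proof -
  let ?f = "\<lambda>u::nat. if u = 0 then 1 else (0::nat)"
  have F0: "fiber (GA 0 A) ?f 0 = {1}" unfolding fiber_def GA_simps by auto
  have F1: "fiber (GA 0 A) ?f 1 = {0}" unfolding fiber_def GA_simps by auto
  show "fiber (GA 0 A) ?f 0 = {1}" using F0 .
  have E: "{e\<in>({}::nat set). ends (GA 0 A) e \<subseteq> X} = {}" for X by simp
  show "contraction n (GA 0 A) (GA 0 ({1..n} - A)) {} ?f id"
    unfolding contraction_def
  proof (intro conjI ballI)
    show "{} \<subseteq> edges (GA 0 A)" by simp
    show "?f ` verts (GA 0 A) = verts (GA 0 ({1..n} - A))" unfolding GA_simps by auto
    show "bij_betw id (edges (GA 0 A) - {}) (edges (GA 0 ({1..n} - A)))"
      unfolding GA_simps by (simp add: bij_betw_def)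
  next
    fix e assume "e \<in> edges (GA 0 A) - {}"
    show "ends (GA 0 ({1..n} - A)) (id e) = ?f ` ends (GA 0 A) e" unfolding GA_simps by auto
  next
    fix e assume "e \<in> ({}::nat set)"
    then show "card (?f ` ends (GA 0 A) e) = 1" by simp
  next
    fix i assume "i \<in> {1..n}"
    then show "leg (GA 0 ({1..n} - A)) i = ?f (leg (GA 0 A) i)" unfolding GA_simps by auto
  next
    fix v assume "v \<in> verts (GA 0 ({1..n} - A))"
    then have "v = 0 \<or> v = 1" by (simp add: GA_simps)
    then show "connected_sub (GA 0 A) (fiber (GA 0 A) ?f v) {e\<in>{}. ends (GA 0 A) e \<subseteq> fiber (GA 0 A) ?f v}"
    proof
      assume "v = 0" show ?thesis unfolding \<open>v = 0\<close> F0 E by (rule conn_single)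
    next
      assume "v = 1" show ?thesis unfolding \<open>v = 1\<close> F1 E by (rule conn_single)
    qed
  next
    fix v assume "v \<in> verts (GA 0 ({1..n} - A))"
    then have "v = 0 \<or> v = 1" by (simp add: GA_simps)
    then show "int (gen (GA 0 ({1..n} - A)) v) = sub_genus (GA 0 A) (fiber (GA 0 A) ?f v) {e\<in>{}. ends (GA 0 A) e \<subseteq> fiber (GA 0 A) ?f v}"
    proof
      assume "v = 0" then show ?thesis unfolding \<open>v = 0\<close> F0 E sub_genus_def by (simp add: GA_simps)
    next
      assume "v = 1" then show ?thesis unfolding \<open>v = 1\<close> F1 E sub_genus_def by (simp add: GA_simps)
    qed
  qed
qed

lemma Kz_big:
  assumes Z: "extremal_assignment g n Z" and A: "A \<in> Kz g n Z" and c: "card A \<ge> 2"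
  shows "0 \<in> Z (GA g A)" "stable_graph g n (GA g A)" "A \<subseteq> {1..n}" "g \<ge> 1 \<or> card ({1..n} - A) \<ge> 2"
proof -
  show A1: "A \<subseteq> {1..n}" using A unfolding Kz_def by simp
  show z: "0 \<in> Z (GA g A)" using A c unfolding Kz_def by simp
  show st: "stable_graph g n (GA g A)" using ext_st[OF Z z] .
  show "g \<ge> 1 \<or> card ({1..n} - A) \<ge> 2" using GA_stable_D[OF st A1] by simp
qed

lemma Kz_simplicial:
  assumes Z: "extremal_assignment g n Z"
  shows "simplicial_complex n (Kz g n Z)"
  unfolding simplicial_complex_def
proof (intro conjI ballI allI impI)
  show "Kz g n Z \<subseteq> Pow {1..n}" unfolding Kz_def by blast
next
  fix i assume "i \<in> {1..n}"
  then show "{i} \<in> Kz g n Z" unfolding Kz_def by simp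
next
  fix A B assume A: "A \<in> Kz g n Z" and BA: "B \<subseteq> A"
  have An: "A \<subseteq> {1..n}" using A unfolding Kz_def by simp
  have Bn: "B \<subseteq> {1..n}" using An BA by blast
  show "B \<in> Kz g n Z"
  proof (cases "card B \<le> 1")
    case True then show ?thesis using Bn unfolding Kz_def by simp
  next
    case False
    then have cB: "card B \<ge> 2" by simp
    have fA: "finite A" using An finite_subset by blast
    have cA: "card A \<ge> 2" using cB card_mono[OF fA BA] by simp
    show ?thesis
    proof (cases "B = A")
      case True then show ?thesis using A by simp
    next
      case False
      then have AB: "A - B \<noteq> {}" using BA by blast
      have zA: "0 \<in> Z (GA g A)" and stA: "stable_graph g n (GA g A)" and cond: "g \<ge> 1 \<or> card ({1..n} - A) \<ge> 2"
        using Kz_big[OF Z A cA] by auto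
      have stH: "stable_graph g n (GH g A B)" using GH_stable[OF BA An cB AB cond] .
      have "card ({1..n} - A) \<le> card ({1..n} - B)" using BA by (intro card_mono) auto
      then have cond': "g \<ge> 1 \<or> card ({1..n} - B) \<ge> 2" using cond by linarith
      have stB: "stable_graph g n (GA g B)" using GA_stable[OF Bn cB cond'] .
      have "0 \<in> Z (GA g A) \<longleftrightarrow> fiber (GH g A B) (\<lambda>u. if u = 2 then 1 else 0) 0 \<subseteq> Z (GH g A B)"
        by (rule ext_Z2[OF Z stH stA GH_to_A(1)[OF BA]]) (simp add: GA_simps)
      then have "{0,1} \<subseteq> Z (GH g A B)" using zA GH_to_A(2)[OF BA] by simp
      moreover have "0 \<in> Z (GA g B) \<longleftrightarrow> fiber (GH g A B) (\<lambda>u. if u = 0 then 0 else 1) 0 \<subseteq> Z (GH g A B)"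
        by (rule ext_Z2[OF Z stH stB GH_to_B(1)]) (simp add: GA_simps)
      ultimately have "0 \<in> Z (GA g B)" using GH_to_B(2) by simp
      then show ?thesis using Bn unfolding Kz_def by simp
    qed
  qed
qed

lemma Kz_triparted:
  assumes Z: "extremal_assignment 0 n Z" and n3: "n \<ge> 3"
  shows "at_least_triparted n (Kz 0 n Z)"
  unfolding at_least_triparted_def
proof (intro allI impI)
  fix P assume a: "set_partition {1..n} P \<and> P \<subseteq> Kz 0 n Z"
  then have part: "set_partition {1..n} P" and PK: "P \<subseteq> Kz 0 n Z" by auto
  have Pn: "\<forall>A\<in>P. A \<subseteq> {1..n}" using PK unfolding Kz_def by blast
  have fP: "finite P" using Pn finite_subset[of P "Pow {1..n}"] by blast
  have big: "card ({1..n} - A) \<ge> 2" if "A \<in> P" "card A \<ge> 2" for A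
    using Kz_big(4)[OF Z _ that(2)] that(1) PK by auto
  have Un: "\<Union>P = {1..n}" using part unfolding set_partition_def by simp
  have ne: "\<forall>A\<in>P. A \<noteq> {}" using part unfolding set_partition_def by simp
  have dj: "\<forall>A\<in>P. \<forall>B\<in>P. A \<noteq> B \<longrightarrow> A \<inter> B = {}" using part unfolding set_partition_def by simp
  show "card P \<ge> 3"
  proof (rule ccontr)
    assume "\<not> card P \<ge> 3"
    then have "card P = 0 \<or> card P = 1 \<or> card P = 2" by linarith
    then show False
    proof (elim disjE)
      assume "card P = 0"
      then have "P = {}" using fP by simp
      then show False using Un n3 by auto
    next
      assume "card P = 1"
      then obtain A where PA: "P = {A}" by (rule card_1_singletonE)
      then have "A = {1..n}" using Un by simp
      then have "card A \<ge> 2" using n3 by simp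
      then have "card ({1..n} - A) \<ge> 2" using big PA by simp
      then show False using \<open>A = {1..n}\<close> by simp
    next
      assume "card P = 2"
      then obtain A B where PAB: "P = {A,B}" "A \<noteq> B" by (auto simp: card_2_iff)
      have AB: "A \<inter> B = {}" using dj PAB by blast
      have U: "A \<union> B = {1..n}" using Un PAB by simp
      have BA: "B = {1..n} - A" using AB U by blast
      have AB': "A = {1..n} - B" using AB U by blast
      have fA: "finite A" and fB: "finite B" using Pn PAB finite_subset by auto
      have cAB: "card A + card B = n" using card_Un_disjoint[OF fA fB AB] U by simp
      have cA: "card A \<ge> 2"
      proof (rule ccontr)
        assume "\<not> card A \<ge> 2"
        then have "card B \<ge> 2" using cAB n3 by linarith
        then have "card ({1..n} - B) \<ge> 2" using big PAB by simp
        then show False using AB' \<open>\<not> card A \<ge> 2\<close> by simp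
      qed
      have cB: "card B \<ge> 2"
      proof (rule ccontr)
        assume "\<not> card B \<ge> 2"
        then have "card A \<ge> 2" using cAB n3 by linarith
        then have "card ({1..n} - A) \<ge> 2" using big PAB by simp
        then show False using BA \<open>\<not> card B \<ge> 2\<close> by simp
      qed
      have AK: "A \<in> Kz 0 n Z" and BK: "B \<in> Kz 0 n Z" using PK PAB by auto
      have zA: "0 \<in> Z (GA 0 A)" and stA: "stable_graph 0 n (GA 0 A)" and An: "A \<subseteq> {1..n}"
        using Kz_big[OF Z AK cA] by auto
      have zB: "0 \<in> Z (GA 0 B)" and stB: "stable_graph 0 n (GA 0 B)"
        using Kz_big[OF Z BK cB] by auto
      have stB': "stable_graph 0 n (GA 0 ({1..n} - A))" using stB BA by simp
      have "0 \<in> Z (GA 0 ({1..n} - A)) \<longleftrightarrow> fiber (GA 0 A) (\<lambda>u. if u = 0 then 1 else 0) 0 \<subseteq> Z (GA 0 A)"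
        by (rule ext_Z2[OF Z stA stB' GA_swap(1)[OF An]]) (simp add: GA_simps)
      then have "1 \<in> Z (GA 0 A)" using zB BA GA_swap(2)[OF An] by simp
      then have "Z (GA 0 A) = verts (GA 0 A)" using zA ext_sub[OF Z stA] by (auto simp: GA_simps)
      then show False using ext_ne[OF Z stA] by simp
    qed
  qed
qed

lemma Kz_of:
  assumes gK: "goodK g n K" and n1: "n \<ge> 1"
  shows "Kz g n (Z_of g n K) = K"
proof (rule set_eqI)
  fix A
  have sc: "simplicial_complex n K" using gK unfolding goodK_def by simp
  have KP: "K \<subseteq> Pow {1..n}" and dn: "\<forall>A\<in>K. \<forall>B. B \<subseteq> A \<longrightarrow> B \<in> K" and sg: "\<forall>i\<in>{1..n}. {i} \<in> K"
    using sc unfolding simplicial_complex_def by auto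
  show "A \<in> Kz g n (Z_of g n K) \<longleftrightarrow> A \<in> K"
  proof
    assume a: "A \<in> Kz g n (Z_of g n K)"
    then have An: "A \<subseteq> {1..n}" unfolding Kz_def by simp
    have fA: "finite A" using An finite_subset by blast
    show "A \<in> K"
    proof (cases "card A \<le> 1")
      case True
      then have "card A = 0 \<or> card A = 1" by linarith
      then show ?thesis
      proof
        assume "card A = 0"
        then have "A = {}" using fA by simp
        moreover have "{1} \<in> K" using sg n1 by simp
        ultimately show ?thesis using dn by blast
      next
        assume "card A = 1"
        then obtain i where "A = {i}" by (rule card_1_singletonE)
        then show ?thesis using sg An by simp
      qed
    next
      case False
      then have z: "0 \<in> Z_of g n K (GA g A)" using a unfolding Kz_def by simp
      then have st: "stable_graph g n (GA g A)" unfolding Z_of_def by (cases "stable_graph g n (GA g A)") auto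
      show ?thesis using GA_Zof[OF st An] z by simp
    qed
  next
    assume a: "A \<in> K"
    then have An: "A \<subseteq> {1..n}" using KP by blast
    have fA: "finite A" using An finite_subset by blast
    show "A \<in> Kz g n (Z_of g n K)"
    proof (cases "card A \<le> 1")
      case True then show ?thesis using An unfolding Kz_def by simp
    next
      case False
      then have cA: "card A \<ge> 2" by simp
      have cond: "g \<ge> 1 \<or> card ({1..n} - A) \<ge> 2"
      proof (cases "g = 0")
        case g0: True
        have tri: "at_least_triparted n K" using gK g0 unfolding goodK_def by simp
        show ?thesis
        proof (rule ccontr)
          assume "\<not> (g \<ge> 1 \<or> card ({1..n} - A) \<ge> 2)"
          then have c1: "card ({1..n} - A) \<le> 1" by simp
          have fC: "finite ({1..n} - A)" by simp
          have Ane: "A \<noteq> {}" using cA by auto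
          have "card ({1..n} - A) = 0 \<or> card ({1..n} - A) = 1" using c1 by linarith
          then show False
          proof
            assume "card ({1..n} - A) = 0"
            then have "{1..n} - A = {}" using fC by simp
            then have "A = {1..n}" using An by blast
            then have "set_partition {1..n} {A}" unfolding set_partition_def using Ane by auto
            moreover have "{A} \<subseteq> K" using a by simp
            ultimately have "card {A} \<ge> 3" using tri unfolding at_least_triparted_def by blast
            then show False by simp
          next
            assume "card ({1..n} - A) = 1"
            then obtain i where i: "{1..n} - A = {i}" by (rule card_1_singletonE)
            then have iA: "i \<notin> A" "i \<in> {1..n}" by auto
            have "set_partition {1..n} {A, {i}}" unfolding set_partition_def
              using Ane An i iA by auto
            moreover have "{A, {i}} \<subseteq> K" using a sg iA by simp
            ultimately have "card {A, {i}} \<ge> 3" using tri unfolding at_least_triparted_def by blast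
            moreover have "A \<noteq> {i}" using iA by auto
            ultimately show False by simp
          qed
        qed
      qed simp
      have st: "stable_graph g n (GA g A)" using GA_stable[OF An cA cond] .
      have "0 \<in> Z_of g n K (GA g A)" using GA_Zof[OF st An] a by simp
      then show ?thesis using An unfolding Kz_def by simp
    qed
  qed
qed

lemma main_bij:
  assumes n1: "n \<ge> 1" and n3: "g = 0 \<longrightarrow> n \<ge> 3"
  shows "bij_betw (Z_of g n) {K. goodK g n K}
           {Z. extremal_assignment g n Z \<and> supported_on_rational_tails g n Z}"
  unfolding bij_betw_def
proof
  show "inj_on (Z_of g n) {K. goodK g n K}"
  proof (rule inj_onI)
    fix K1 K2 assume k1: "K1 \<in> {K. goodK g n K}" and k2: "K2 \<in> {K. goodK g n K}" and eq: "Z_of g n K1 = Z_of g n K2"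
    have "K1 = Kz g n (Z_of g n K1)" using Kz_of[OF _ n1] k1 by simp
    also have "\<dots> = Kz g n (Z_of g n K2)" using eq by simp
    also have "\<dots> = K2" using Kz_of[OF _ n1] k2 by simp
    finally show "K1 = K2" .
  qed
  show "Z_of g n ` {K. goodK g n K} = {Z. extremal_assignment g n Z \<and> supported_on_rational_tails g n Z}"
  proof (rule equalityI; rule subsetI)
    fix Z assume "Z \<in> Z_of g n ` {K. goodK g n K}"
    then obtain K where K: "goodK g n K" "Z = Z_of g n K" by blast
    then show "Z \<in> {Z. extremal_assignment g n Z \<and> supported_on_rational_tails g n Z}"
      using Zof_extremal Zof_supp by blast
  next
    fix Z assume "Z \<in> {Z. extremal_assignment g n Z \<and> supported_on_rational_tails g n Z}"
    then have Z: "extremal_assignment g n Z" and S: "supported_on_rational_tails g n Z" by auto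
    have g: "goodK g n (Kz g n Z)" unfolding goodK_def
    proof (intro conjI impI)
      show "simplicial_complex n (Kz g n Z)" using Kz_simplicial[OF Z] .
    next
      assume g0: "g = 0"
      show "at_least_triparted n (Kz g n Z)" using Kz_triparted[of n Z] Z g0 n3 by simp
    qed
    have "Z = Z_of g n (Kz g n Z)" using Z_eq[OF Z S] by simp
    then show "Z \<in> Z_of g n ` {K. goodK g n K}" using g by blast
  qed
qed

theorem lemma4p15:
  shows "(g \<ge> 1 \<and> n \<ge> 1 \<longrightarrow>
            bij_betw (Z_of g n) {K. simplicial_complex n K}
              {Z. extremal_assignment g n Z \<and> supported_on_rational_tails g n Z})
       \<and> (n \<ge> 3 \<longrightarrow>
            bij_betw (Z_of 0 n) {K. simplicial_complex n K \<and> at_least_triparted n K}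
              {Z. extremal_assignment 0 n Z \<and> supported_on_rational_tails 0 n Z})"
proof (intro conjI impI)
  assume a: "g \<ge> 1 \<and> n \<ge> 1"
  have "{K. simplicial_complex n K} = {K. goodK g n K}" using a unfolding goodK_def by auto
  then show "bij_betw (Z_of g n) {K. simplicial_complex n K}
              {Z. extremal_assignment g n Z \<and> supported_on_rational_tails g n Z}"
    using main_bij[of n g] a by simp
next
  assume a: "n \<ge> 3"
  have "{K. simplicial_complex n K \<and> at_least_triparted n K} = {K. goodK 0 n K}" unfolding goodK_def by auto
  then show "bij_betw (Z_of 0 n) {K. simplicial_complex n K \<and> at_least_triparted n K}
              {Z. extremal_assignment 0 n Z \<and> supported_on_rational_tails 0 n Z}"
    using main_bij[of n 0] a by simp
qed


end
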